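(* Let $h>0$, $0<\alpha\le 2$, $N=2^n$, and $M=2^m$ with $M\ge 2N$. Let $c_r$, $A^{(N)}_{\alpha,h}$, $\widetilde A^{(M)}_{\alpha,h}$, $P_{N\to M}$, $\lambda_{\max}$ and $U^{(M)}_{\rm BE}$ be as in the context. Then \[ P_{N\to M}^{\dagger}\,\widetilde A^{(M)}_{\alpha,h}\,P_{N\to M}=A^{(N)}_{\alpha,h}+E^{(M)}, \] where $E^{(M)}$ is the $N\times N$ matrix with entries $(E^{(M)})_{ij}=\sum_{\ell\neq 0}c_{i-j+\ell M}$ for $0\le i,j\le N-1$. Consequently, \[ (P_{N\to M}^{\dagger}\otimes\langle 0|)\,U^{(M)}_{\rm BE}\,(P_{N\to M}\otimes|0\rangle)=\frac{A^{(N)}_{\alpha,h}+E^{(M)}}{\lambda_{\max}}. \]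
   Context: Kernel: for $r\in\mathbb Z$, $c_r=\frac{h}{2\pi}\int_{-\pi/h}^{\pi/h}|\xi|^\alpha e^{i\xi h r}\,d\xi$. $A^{(N)}_{\alpha,h}$ is the $N\times N$ Toeplitz matrix (indices $0,\ldots,N-1$) with entries $c_{i-j}$ (the open zero-extension semi-discrete fractional Laplacian). For a size $L=2^\ell$, the FFT-ordered grid is $\bar\xi_k=2\pi k/(Lh)$ for $0\le k<L/2$ and $\bar\xi_k=2\pi k/(Lh)-2\pi/h$ for $L/2\le k<L$; $QFT_L$ is the unitary matrix with entries $(QFT_L)_{kj}=L^{-1/2}e^{2\pi i jk/L}$; and $\widetilde A^{(L)}_{\alpha,h}=QFT_L^{-1}\operatorname{diag}(|\bar\xi_k|^\alpha)_{k=0}^{L-1}QFT_L$. $P_{N\to M}:\mathbb C^N\to\mathbb C^M$ is the zero-padding isometry $P_{N\to M}(u_0,\ldots,u_{N-1})=(u_0,\ldots,u_{N-1},0,\ldots,0)$. Let $\lambda_{\max}=(\pi/h)^\alpha$ and, on the size-$M$ grid, $\phi_k=|\bar\xi_k|^\alpha/\lambda_{\max}\in[0,1]$. Let $U_D$ be a unitary on $\mathbb C^M\otimes\mathbb C^2$ with $U_D|k\rangle|0\rangle=|k\rangle(\phi_k|0\rangle+\sqrt{1-\phi_k^2}\,|1\rangle)$ for all $k$, and $U^{(M)}_{\rm BE}=(QFT_M^{-1}\otimes I)\,U_D\,(QFT_M\otimes I)$. *)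

theory Defs
  imports "HOL-Analysis.Analysis" "Jordan_Normal_Form.Matrix"
begin

definition kernel_c :: "real \<Rightarrow> real \<Rightarrow> int \<Rightarrow> complex" where
  "kernel_c h \<alpha> r = complex_of_real (h / (2 * pi)) *
     integral {-pi/h..pi/h} (\<lambda>\<xi>::real. complex_of_real (\<bar>\<xi>\<bar> powr \<alpha>) * cis (\<xi> * h * of_int r))"

definition A_mat :: "real \<Rightarrow> real \<Rightarrow> nat \<Rightarrow> complex mat" where
  "A_mat h \<alpha> N = mat N N (\<lambda>(i,j). kernel_c h \<alpha> (int i - int j))"

(* FFT-ordered frequency grid of size L *)
definition xi_bar :: "real \<Rightarrow> nat \<Rightarrow> nat \<Rightarrow> real" where
  "xi_bar h L k = (if k < L div 2 then 2 * pi * real k / (real L * h)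
                   else 2 * pi * real k / (real L * h) - 2 * pi / h)"

definition ctrans :: "complex mat \<Rightarrow> complex mat" where
  "ctrans A = mat (dim_col A) (dim_row A) (\<lambda>(i,j). cnj (A $$ (j,i)))"

definition QFT :: "nat \<Rightarrow> complex mat" where
  "QFT L = mat L L (\<lambda>(k,j). complex_of_real (1 / sqrt (real L)) * cis (2 * pi * real j * real k / real L))"

(* QFT_L^{-1}; QFT_L is unitary, so its inverse is its conjugate transpose *)
definition QFT_inv :: "nat \<Rightarrow> complex mat" where
  "QFT_inv L = ctrans (QFT L)"

definition diag_of :: "nat \<Rightarrow> (nat \<Rightarrow> complex) \<Rightarrow> complex mat" where
  "diag_of L d = mat L L (\<lambda>(i,j). if i = j then d i else 0)"

definition A_tilde :: "real \<Rightarrow> real \<Rightarrow> nat \<Rightarrow> complex mat" where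
  "A_tilde h \<alpha> L = QFT_inv L * diag_of L (\<lambda>k. complex_of_real (\<bar>xi_bar h L k\<bar> powr \<alpha>)) * QFT L"

definition pad :: "nat \<Rightarrow> nat \<Rightarrow> complex mat" where
  "pad N M = mat M N (\<lambda>(i,j). if i = j then 1 else 0)"

definition E_mat :: "real \<Rightarrow> real \<Rightarrow> nat \<Rightarrow> nat \<Rightarrow> complex mat" where
  "E_mat h \<alpha> N M = mat N N (\<lambda>(i,j).
     infsum (\<lambda>l::int. kernel_c h \<alpha> (int i - int j + l * int M)) (UNIV - {0}))"

definition lambda_max :: "real \<Rightarrow> real \<Rightarrow> real" where
  "lambda_max h \<alpha> = (pi / h) powr \<alpha>"

definition phi :: "real \<Rightarrow> real \<Rightarrow> nat \<Rightarrow> nat \<Rightarrow> real" where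
  "phi h \<alpha> M k = \<bar>xi_bar h M k\<bar> powr \<alpha> / lambda_max h \<alpha>"

(* Kronecker product; for C^a (x) C^b the basis vector |i>|j> has index i*b + j *)
definition kron :: "complex mat \<Rightarrow> complex mat \<Rightarrow> complex mat" where
  "kron A B = mat (dim_row A * dim_row B) (dim_col A * dim_col B)
     (\<lambda>(i,j). A $$ (i div dim_row B, j div dim_col B) * B $$ (i mod dim_row B, j mod dim_col B))"

definition ket0 :: "complex mat" where "ket0 = mat 2 1 (\<lambda>(i,j). if i = 0 then 1 else 0)"
definition bra0 :: "complex mat" where "bra0 = mat 1 2 (\<lambda>(i,j). if j = 0 then 1 else 0)"

definition unitary_mat :: "nat \<Rightarrow> complex mat \<Rightarrow> bool" where
  "unitary_mat n U \<longleftrightarrow> U \<in> carrier_mat n n \<and> ctrans U * U = 1\<^sub>m n \<and> U * ctrans U = 1\<^sub>m n"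

definition U_BE :: "nat \<Rightarrow> complex mat \<Rightarrow> complex mat" where
  "U_BE M UD = kron (QFT_inv M) (1\<^sub>m 2) * UD * kron (QFT M) (1\<^sub>m 2)"

end

theory Submission
  imports Defs
begin

lemma powr_abs_cont: "0 < a \<Longrightarrow> continuous_on UNIV (\<lambda>x::real. \<bar>x\<bar> powr a)"
  unfolding continuous_on_def
  by (auto intro!: tendsto_powr' tendsto_intros)

lemma G_deriv:
  fixes a w x :: real
  assumes "0 < x" "w \<noteq> 0"
  shows "((\<lambda>t. t powr a * sin (w*t) / w + a * t powr (a-1) * cos (w*t) / w\<^sup>2)
     has_real_derivative (x powr a * cos (w*x) + a * ((a-1) * x powr (a-2)) * cos (w*x) / w\<^sup>2)) (at x)"
proof -
  have e: "x powr (a - 1 - 1) = x powr (a-2)" by (simp add: algebra_simps)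
  show ?thesis
    using assms
    apply -
    apply (rule derivative_eq_intros refl | simp)+
    apply (simp add: e field_simps power2_eq_square eval_nat_numeral)
    done
qed

lemma cos_int_bound:
  fixes a w T :: real
  assumes a0: "0 < a" and a2: "a \<le> 2" and w0: "0 < w" and "0 < T" and sT: "sin (w*T) = 0"
    and dT: "1/w \<le> T"
  shows "\<bar>integral {0..T} (\<lambda>t. \<bar>t\<bar> powr a * cos (w*t))\<bar>
           \<le> (2 + 2*a) * w powr (-1-a) + 2*a * T powr (a-1) / w\<^sup>2"
proof -
  define d where "d = 1/w"
  have d0: "0 < d" using w0 by (simp add: d_def)
  have dT': "d \<le> T" using dT d_def by simp
  define G where "G = (\<lambda>t::real. t powr a * sin (w*t) / w + a * t powr (a-1) * cos (w*t) / w\<^sup>2)"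
  define g2 where "g2 = (\<lambda>t::real. (a-1) * t powr (a-2) * cos (w*t))"
  have contf: "continuous_on UNIV (\<lambda>t::real. \<bar>t\<bar> powr a * cos (w*t))"
    by (intro continuous_on_mult powr_abs_cont[OF a0] continuous_intros)
  have intf: "(\<lambda>t::real. \<bar>t\<bar> powr a * cos (w*t)) integrable_on {x..y}" for x y
    by (rule integrable_continuous_interval) (rule continuous_on_subset[OF contf], simp)
  have split: "integral {0..T} (\<lambda>t. \<bar>t\<bar> powr a * cos (w*t))
      = integral {0..d} (\<lambda>t. \<bar>t\<bar> powr a * cos (w*t)) + integral {d..T} (\<lambda>t. \<bar>t\<bar> powr a * cos (w*t))"
    using Henstock_Kurzweil_Integration.integral_combine[OF _ dT' intf] d0 by simp
  have b0: "\<bar>integral {0..d} (\<lambda>t. \<bar>t\<bar> powr a * cos (w*t))\<bar> \<le> d * d powr a"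
  proof -
    have "norm (integral {0..d} (\<lambda>t. \<bar>t\<bar> powr a * cos (w*t))) \<le> integral {0..d} (\<lambda>t. d powr a)"
    proof (rule integral_norm_bound_integral[OF intf])
      show "(\<lambda>t. d powr a) integrable_on {0..d}" by (intro integrable_continuous_interval continuous_intros)
      fix t assume t: "t \<in> {0..d}"
      have "norm (\<bar>t\<bar> powr a * cos (w*t)) = \<bar>t\<bar> powr a * \<bar>cos (w*t)\<bar>" by (simp add: abs_mult)
      also have "\<dots> \<le> \<bar>t\<bar> powr a * 1" by (intro mult_left_mono) auto
      also have "\<dots> \<le> d powr a" using t a0 by (auto intro!: powr_mono2)
      finally show "norm (\<bar>t\<bar> powr a * cos (w*t)) \<le> d powr a" .
    qed
    then show ?thesis using d0 by simp
  qed
  have derG: "(G has_vector_derivative (\<bar>t\<bar> powr a * cos (w*t) + a * g2 t / w\<^sup>2)) (at t within {d..T})"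
    if t: "t \<in> {d..T}" for t
  proof -
    have tp: "0 < t" using t d0 by auto
    have "(G has_real_derivative (t powr a * cos (w*t) + a * ((a-1) * t powr (a-2)) * cos (w*t) / w\<^sup>2)) (at t)"
      unfolding G_def using G_deriv[OF tp, of w a] w0 by simp
    then show ?thesis using tp
      by (auto simp: has_real_derivative_iff_has_vector_derivative g2_def mult.assoc
               intro: has_vector_derivative_at_within)
  qed
  have ftc1: "((\<lambda>t. \<bar>t\<bar> powr a * cos (w*t) + a * g2 t / w\<^sup>2) has_integral (G T - G d)) {d..T}"
    by (rule fundamental_theorem_of_calculus[OF dT' derG])
  have contg2: "continuous_on {d..T} g2"
    unfolding g2_def using d0 by (intro continuous_intros) auto
  have intg2: "g2 integrable_on {d..T}" by (rule integrable_continuous_interval[OF contg2])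
  have intg2': "(\<lambda>t. a * g2 t / w\<^sup>2) integrable_on {d..T}"
    using integrable_on_cmult_right[OF intg2, of "a / w\<^sup>2"] by (simp add: field_simps)
  have eq1: "integral {d..T} (\<lambda>t. \<bar>t\<bar> powr a * cos (w*t)) = (G T - G d) - a / w\<^sup>2 * integral {d..T} g2"
  proof -
    have "integral {d..T} (\<lambda>t. \<bar>t\<bar> powr a * cos (w*t) + a * g2 t / w\<^sup>2)
        = integral {d..T} (\<lambda>t. \<bar>t\<bar> powr a * cos (w*t)) + integral {d..T} (\<lambda>t. a * g2 t / w\<^sup>2)"
      by (rule integral_add[OF intf intg2'])
    moreover have "integral {d..T} (\<lambda>t. a * g2 t / w\<^sup>2) = a / w\<^sup>2 * integral {d..T} g2"
      using integral_mult[OF intg2, of "a / w\<^sup>2"] by (simp add: field_simps)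
    ultimately show ?thesis using integral_unique[OF ftc1] by simp
  qed
  define sg where "sg = (if 1 \<le> a then 1 else -1::real)"
  have sgabs: "sg * (a-1) = \<bar>a-1\<bar>" by (simp add: sg_def)
  have ftc2: "((\<lambda>t. (a-1) * t powr (a-2)) has_integral (T powr (a-1) - d powr (a-1))) {d..T}"
  proof (rule fundamental_theorem_of_calculus[OF dT'])
    fix t assume t: "t \<in> {d..T}"
    have tp: "0 < t" using t d0 by auto
    have e: "t powr (a - 1 - 1) = t powr (a-2)" by (simp add: algebra_simps)
    have "((\<lambda>t. t powr (a-1)) has_real_derivative ((a-1) * t powr (a-2))) (at t)"
      using has_real_derivative_powr[OF tp, of "a-1"] e by simp
    then show "((\<lambda>t. t powr (a-1)) has_vector_derivative ((a-1) * t powr (a-2))) (at t within {d..T})"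
      by (auto simp: has_real_derivative_iff_has_vector_derivative intro: has_vector_derivative_at_within)
  qed
  have b2: "\<bar>integral {d..T} g2\<bar> \<le> T powr (a-1) + d powr (a-1)"
  proof -
    have "norm (integral {d..T} g2) \<le> integral {d..T} (\<lambda>t. sg * ((a-1) * t powr (a-2)))"
    proof (rule integral_norm_bound_integral[OF intg2])
      show "(\<lambda>t. sg * ((a-1) * t powr (a-2))) integrable_on {d..T}"
        using has_integral_mult_right[OF ftc2, of sg] by (auto simp: has_integral_integrable_integral)
      fix t assume t: "t \<in> {d..T}"
      have "norm (g2 t) = \<bar>a-1\<bar> * t powr (a-2) * \<bar>cos (w*t)\<bar>" by (simp add: g2_def abs_mult)
      also have "\<dots> \<le> \<bar>a-1\<bar> * t powr (a-2) * 1" by (intro mult_left_mono) auto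
      finally show "norm (g2 t) \<le> sg * ((a-1) * t powr (a-2))" using sgabs by (simp add: mult.assoc[symmetric])
    qed
    also have "\<dots> = sg * (T powr (a-1) - d powr (a-1))"
      using integral_unique[OF has_integral_mult_right[OF ftc2, of sg]] by simp
    also have "\<dots> \<le> T powr (a-1) + d powr (a-1)" by (auto simp: sg_def)
    finally show ?thesis by simp
  qed
  have GT: "\<bar>G T\<bar> \<le> a * T powr (a-1) / w\<^sup>2"
  proof -
    have "\<bar>G T\<bar> = a * T powr (a-1) * \<bar>cos (w*T)\<bar> / w\<^sup>2" using sT a0 by (simp add: G_def abs_mult)
    also have "\<dots> \<le> a * T powr (a-1) * 1 / w\<^sup>2" using a0
      by (intro divide_right_mono mult_left_mono) auto
    finally show ?thesis by simp
  qed
  have Gd: "\<bar>G d\<bar> \<le> d powr a / w + a * d powr (a-1) / w\<^sup>2"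
  proof -
    have "\<bar>G d\<bar> \<le> \<bar>d powr a * sin (w*d) / w\<bar> + \<bar>a * d powr (a-1) * cos (w*d) / w\<^sup>2\<bar>"
      unfolding G_def by (rule abs_triangle_ineq)
    also have "\<bar>d powr a * sin (w*d) / w\<bar> \<le> d powr a / w"
      using w0 by (simp add: abs_mult divide_right_mono mult_left_le)
    also have "\<bar>a * d powr (a-1) * cos (w*d) / w\<^sup>2\<bar> \<le> a * d powr (a-1) / w\<^sup>2"
      using w0 a0 by (simp add: abs_mult divide_right_mono mult_left_le)
    finally show ?thesis by simp
  qed
  have tri: "\<bar>x + (p - q - r)\<bar> \<le> \<bar>x\<bar> + (\<bar>p\<bar> + \<bar>q\<bar>) + \<bar>r\<bar>" for x p q r :: real by arith
  have ar: "\<bar>a / w\<^sup>2 * integral {d..T} g2\<bar> = a / w\<^sup>2 * \<bar>integral {d..T} g2\<bar>"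
    using a0 w0 by (simp add: abs_mult)
  have m2: "a / w\<^sup>2 * \<bar>integral {d..T} g2\<bar> \<le> a / w\<^sup>2 * (T powr (a-1) + d powr (a-1))"
    using b2 a0 w0 by (intro mult_left_mono) auto
  have total: "\<bar>integral {0..T} (\<lambda>t. \<bar>t\<bar> powr a * cos (w*t))\<bar>
      \<le> d * d powr a + (a * T powr (a-1) / w\<^sup>2 + (d powr a / w + a * d powr (a-1) / w\<^sup>2))
         + a / w\<^sup>2 * (T powr (a-1) + d powr (a-1))"
    unfolding split eq1 using tri[of "integral {0..d} (\<lambda>t. \<bar>t\<bar> powr a * cos (w*t))" "G T" "G d"
       "a / w\<^sup>2 * integral {d..T} g2"] ar m2 b0 GT Gd by linarith
  have dpw: "d powr x = 1 / w powr x" for x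
    using powr_divide[of 1 w x] w0 by (simp add: d_def)
  have p1: "d powr a = w powr (-a)" by (simp add: dpw powr_minus_divide)
  have wm: "w powr (-1-a) = (1/w) * w powr (-a)"
    using powr_add[of w "-1" "-a"] w0 by (simp add: powr_minus_divide)
  have p2: "d * d powr a = w powr (-1-a)" unfolding p1 wm by (simp add: d_def)
  have p3: "d powr a / w = w powr (-1-a)" unfolding p1 wm by simp
  have p4: "d powr (a-1) / w\<^sup>2 = w powr (-1-a)"
  proof -
    have "w powr (a-1) = w powr a / w" using w0 by (simp add: powr_diff)
    then show ?thesis using w0 unfolding dpw wm p1[unfolded dpw]
      by (simp add: powr_minus_divide field_simps power2_eq_square)
  qed
  have e1: "a * d powr (a-1) / w\<^sup>2 = a * w powr (-1-a)" using p4 by (simp add: mult.assoc[symmetric] times_divide_eq_right[symmetric])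
  have e2: "a / w\<^sup>2 * (T powr (a-1) + d powr (a-1)) = a * T powr (a-1) / w\<^sup>2 + a * w powr (-1-a)"
    using e1 by (simp add: distrib_left)
  show ?thesis using total unfolding p2 p3 e1 e2 by (simp add: algebra_simps)
qed

lemma cis_plus_cis_neg: "cis x + cis (-x) = complex_of_real (2 * cos x)"
  by (simp add: complex_eq_iff)

lemma integral_of_real_HK:
  assumes "f integrable_on S"
  shows "integral S (\<lambda>x. complex_of_real (f x)) = complex_of_real (integral S f)"
  using integral_unique[OF has_integral_of_real[OF integrable_integral[OF assms]]] by simp

lemma kernel_c_cos:
  assumes h: "0 < h" and a: "0 < \<alpha>"
  shows "kernel_c h \<alpha> r = complex_of_real (h / pi * integral {0..pi/h} (\<lambda>t. \<bar>t\<bar> powr \<alpha> * cos ((h * of_int r) * t)))"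
proof -
  define T where "T = pi / h"
  have T0: "0 < T" using h by (simp add: T_def)
  define w where "w = h * of_int r"
  define g where "g = (\<lambda>\<xi>::real. complex_of_real (\<bar>\<xi>\<bar> powr \<alpha>) * cis (\<xi> * w))"
  have contg: "continuous_on UNIV g"
    unfolding g_def
    by (intro continuous_on_mult continuous_on_of_real powr_abs_cont[OF a] continuous_intros)
  have intg: "g integrable_on {x..y}" for x y
    by (rule integrable_continuous_interval) (rule continuous_on_subset[OF contg], simp)
  have contg': "continuous_on UNIV (\<lambda>x. g (-x))"
    by (rule continuous_on_compose2[OF contg]) (auto intro: continuous_intros)
  have intg': "(\<lambda>x. g (-x)) integrable_on {x..y}" for x y
    by (rule integrable_continuous_interval) (rule continuous_on_subset[OF contg'], simp)
  have contr: "continuous_on UNIV (\<lambda>t::real. \<bar>t\<bar> powr \<alpha> * cos (w * t))"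
    by (intro continuous_on_mult powr_abs_cont[OF a] continuous_intros)
  have intr: "(\<lambda>t::real. \<bar>t\<bar> powr \<alpha> * cos (w * t)) integrable_on {x..y}" for x y
    by (rule integrable_continuous_interval) (rule continuous_on_subset[OF contr], simp)
  have "integral {-T..T} g = integral {-T..0} g + integral {0..T} g"
    using Henstock_Kurzweil_Integration.integral_combine[of "-T" 0 T g] T0 intg by simp
  also have "integral {-T..0} g = integral {0..T} (\<lambda>x. g (-x))"
    using Henstock_Kurzweil_Integration.integral_reflect_real[of T 0 "\<lambda>x. g (-x)"] by simp
  also have "integral {0..T} (\<lambda>x. g (-x)) + integral {0..T} g = integral {0..T} (\<lambda>x. g (-x) + g x)"
    by (rule integral_add[symmetric, OF intg' intg])
  also have "\<dots> = integral {0..T} (\<lambda>t. complex_of_real (2 * (\<bar>t\<bar> powr \<alpha> * cos (w * t))))"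
  proof (rule integral_cong)
    fix t assume "t \<in> {0..T}"
    have "g (-t) + g t = complex_of_real (\<bar>t\<bar> powr \<alpha>) * (cis (t*w) + cis (-(t*w)))"
      unfolding g_def by (simp add: algebra_simps)
    also have "\<dots> = complex_of_real (2 * (\<bar>t\<bar> powr \<alpha> * cos (w * t)))"
      unfolding cis_plus_cis_neg by (simp add: mult.commute)
    finally show "g (-t) + g t = complex_of_real (2 * (\<bar>t\<bar> powr \<alpha> * cos (w * t)))" .
  qed
  also have "\<dots> = complex_of_real (2 * integral {0..T} (\<lambda>t. \<bar>t\<bar> powr \<alpha> * cos (w * t)))"
    using integral_of_real_HK[of "\<lambda>t. 2 * (\<bar>t\<bar> powr \<alpha> * cos (w * t))"] intr by simp
  finally have I: "integral {-T..T} g = complex_of_real (2 * integral {0..T} (\<lambda>t. \<bar>t\<bar> powr \<alpha> * cos (w * t)))" .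
  have dom: "{-pi/h..pi/h} = {-T..T}" by (simp add: T_def)
  have "kernel_c h \<alpha> r = complex_of_real (h / (2*pi)) * integral {-T..T} g"
    unfolding kernel_c_def dom g_def w_def by (simp add: mult.assoc)
  also have "\<dots> = complex_of_real (h / pi * integral {0..T} (\<lambda>t. \<bar>t\<bar> powr \<alpha> * cos (w * t)))"
    unfolding I by simp
  finally show ?thesis by (simp add: T_def w_def)
qed

lemma kernel_c_bound:
  assumes h: "0 < h" and a: "0 < \<alpha>" and a2: "\<alpha> \<le> 2" and r: "r \<noteq> 0"
  shows "norm (kernel_c h \<alpha> r) \<le> h / pi * ((2 + 2*\<alpha>) * (h * \<bar>real_of_int r\<bar>) powr (-1-\<alpha>)
            + 2*\<alpha> * (pi/h) powr (\<alpha>-1) / (h * \<bar>real_of_int r\<bar>)\<^sup>2)"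
proof -
  define w where "w = h * \<bar>real_of_int r\<bar>"
  have w0: "0 < w" using h r by (simp add: w_def)
  have cc: "cos ((h * of_int r) * t) = cos (w * t)" for t
  proof (cases "r \<ge> 0")
    case True then show ?thesis by (simp add: w_def)
  next
    case False
    then have "(h * of_int r) * t = - (w * t)" by (simp add: w_def)
    then show ?thesis by simp
  qed
  have sT: "sin (w * (pi/h)) = 0"
  proof -
    have "w * (pi/h) = real_of_int \<bar>r\<bar> * pi" using h by (simp add: w_def)
    moreover have "real_of_int \<bar>r\<bar> = real (nat \<bar>r\<bar>)" by simp
    ultimately show ?thesis using sin_npi[of "nat \<bar>r\<bar>"] by metis
  qed
  have dT: "1/w \<le> pi/h"
  proof -
    have "1 \<le> \<bar>real_of_int r\<bar>" using r by linarith
    then have "1 \<le> pi * \<bar>real_of_int r\<bar>" using pi_ge_two by (smt (verit) mult_le_cancel_right1)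
    then show ?thesis using h r by (simp add: w_def field_simps)
  qed
  have B: "\<bar>integral {0..pi/h} (\<lambda>t. \<bar>t\<bar> powr \<alpha> * cos (w*t))\<bar>
           \<le> (2 + 2*\<alpha>) * w powr (-1-\<alpha>) + 2*\<alpha> * (pi/h) powr (\<alpha>-1) / w\<^sup>2"
    by (rule cos_int_bound[OF a a2 w0 _ sT dT]) (use h in simp)
  have "norm (kernel_c h \<alpha> r) = h / pi * \<bar>integral {0..pi/h} (\<lambda>t. \<bar>t\<bar> powr \<alpha> * cos (w*t))\<bar>"
    unfolding kernel_c_cos[OF h a] cc norm_of_real abs_mult using h by simp
  also have "\<dots> \<le> h / pi * ((2 + 2*\<alpha>) * w powr (-1-\<alpha>) + 2*\<alpha> * (pi/h) powr (\<alpha>-1) / w\<^sup>2)"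
    using B h by (intro mult_left_mono) auto
  finally show ?thesis by (simp add: w_def)
qed

lemma nat_powr_summable: "p < -1 \<Longrightarrow> (\<lambda>n::nat. real n powr p) summable_on UNIV"
  by (rule norm_summable_imp_summable_on) (simp add: summable_real_powr_iff)

lemma int_powr_summable:
  assumes p: "p < -1"
  shows "(\<lambda>s::int. real_of_int \<bar>s\<bar> powr p) summable_on UNIV"
proof -
  have pos: "(\<lambda>s::int. real_of_int \<bar>s\<bar> powr p) summable_on range int"
    using summable_on_reindex[of int UNIV "\<lambda>s::int. real_of_int \<bar>s\<bar> powr p"] nat_powr_summable[OF p]
    by (simp add: o_def)
  have neg0: "(\<lambda>s::int. real_of_int \<bar>s\<bar> powr p) summable_on range (\<lambda>n. - int n)"
  proof -
    have inj: "inj_on (\<lambda>n::nat. - int n) UNIV" by (auto simp: inj_on_def)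
    show ?thesis
      using summable_on_reindex[OF inj, of "\<lambda>s::int. real_of_int \<bar>s\<bar> powr p"] nat_powr_summable[OF p]
      by (simp add: o_def)
  qed
  have neg: "(\<lambda>s::int. real_of_int \<bar>s\<bar> powr p) summable_on {s. s < 0}"
  proof (rule summable_on_subset_banach[OF neg0])
    show "{s::int. s < 0} \<subseteq> range (\<lambda>n. - int n)"
    proof
      fix s :: int assume "s \<in> {s. s < 0}"
      then have "s = - int (nat (-s))" by simp
      then show "s \<in> range (\<lambda>n. - int n)" by blast
    qed
  qed
  have U: "range int \<union> {s::int. s < 0} = UNIV"
  proof -
    have "s \<in> range int" if "\<not> s < 0" for s :: int
      using that by (metis nonneg_int_cases rangeI not_less)
    then show ?thesis by blast
  qed
  show ?thesis
  proof -
    have "range int \<inter> {s::int. s < 0} = {}" by auto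
    then show ?thesis using summable_on_Un_disjoint[OF pos neg] U by simp
  qed
qed

lemma kernel_c_summable:
  assumes h: "0 < h" and a: "0 < \<alpha>" and a2: "\<alpha> \<le> 2"
  shows "(\<lambda>s::int. norm (kernel_c h \<alpha> s)) summable_on UNIV"
    and "kernel_c h \<alpha> summable_on UNIV"
proof -
  define K1 where "K1 = h / pi * (2 + 2*\<alpha>) * h powr (-1-\<alpha>)"
  define K2 where "K2 = h / pi * (2*\<alpha> * (pi/h) powr (\<alpha>-1)) / h\<^sup>2"
  define g where "g = (\<lambda>s::int. K1 * real_of_int \<bar>s\<bar> powr (-1-\<alpha>) + K2 * real_of_int \<bar>s\<bar> powr (-2))"
  have gs: "g summable_on UNIV"
    unfolding g_def
    by (intro summable_on_add summable_on_cmult_right int_powr_summable) (use a in auto)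
  have "(\<lambda>s::int. norm (kernel_c h \<alpha> s)) summable_on (UNIV - {0})"
  proof (rule summable_on_comparison_test[of g])
    show "g summable_on UNIV - {0}" by (rule summable_on_subset[OF gs]) auto
    fix s :: int assume "s \<in> UNIV - {0}"
    then have s: "s \<noteq> 0" by simp
    have sp: "0 < real_of_int \<bar>s\<bar>" using s by simp
    have e1: "(h * \<bar>real_of_int s\<bar>) powr (-1-\<alpha>) = h powr (-1-\<alpha>) * real_of_int \<bar>s\<bar> powr (-1-\<alpha>)"
      using h by (simp add: powr_mult)
    have e2: "1 / (h * \<bar>real_of_int s\<bar>)\<^sup>2 = 1 / h\<^sup>2 * real_of_int \<bar>s\<bar> powr (-2)"
    proof -
      have "real_of_int \<bar>s\<bar> powr (-2) = 1 / (real_of_int \<bar>s\<bar>)\<^sup>2"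
        using sp by (simp add: powr_minus_divide powr_realpow[symmetric])
      then show ?thesis by (simp add: power_mult_distrib)
    qed
    have "norm (kernel_c h \<alpha> s) \<le> h / pi * ((2 + 2*\<alpha>) * (h * \<bar>real_of_int s\<bar>) powr (-1-\<alpha>)
            + 2*\<alpha> * (pi/h) powr (\<alpha>-1) / (h * \<bar>real_of_int s\<bar>)\<^sup>2)"
      by (rule kernel_c_bound[OF h a a2 s])
    also have "\<dots> = g s"
    proof -
      have "2*\<alpha> * (pi/h) powr (\<alpha>-1) / (h * \<bar>real_of_int s\<bar>)\<^sup>2
          = 2*\<alpha> * (pi/h) powr (\<alpha>-1) * (1 / (h * \<bar>real_of_int s\<bar>)\<^sup>2)" by simp
      then show ?thesis unfolding g_def K1_def K2_def e1 e2 by (simp add: algebra_simps)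
    qed
    finally show "norm (kernel_c h \<alpha> s) \<le> g s" .
  qed simp
  then show ns: "(\<lambda>s::int. norm (kernel_c h \<alpha> s)) summable_on UNIV"
    using summable_on_insert_iff[of "\<lambda>s::int. norm (kernel_c h \<alpha> s)" 0 "UNIV - {0}"]
    by (simp add: insert_absorb)
  show "kernel_c h \<alpha> summable_on UNIV"
    using ns summable_on_iff_abs_summable_on_complex by blast
qed

lemma sin_ge_half: assumes "0 \<le> y" "y \<le> pi/2" shows "y / 2 \<le> sin y"
proof -
  have y1: "-(pi/2) < y/2" "y/2 < pi/2" using assms pi_gt_zero by linarith+
  have c: "0 < cos (y/2)" by (rule cos_gt_zero_pi[OF y1])
  have "\<bar>y/2\<bar> \<le> \<bar>tan (y/2)\<bar>" using assms pi_gt3 by (intro abs_tan_ge) auto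
  moreover have "0 \<le> tan (y/2)" unfolding tan_def using assms c
    by (intro divide_nonneg_pos sin_ge_zero) auto
  moreover have s0: "0 \<le> sin (y/2)" using assms by (intro sin_ge_zero) auto
  ultimately have t: "y/2 \<le> sin (y/2) / cos (y/2)" using assms c by (simp add: tan_def)
  then have s: "y/2 * cos (y/2) \<le> sin (y/2)" using c by (simp add: field_simps)
  have "sin y = 2 * sin (y/2) * cos (y/2)" using sin_double[of "y/2"] by simp
  also have "\<dots> \<ge> 2 * (y/2 * cos (y/2)) * cos (y/2)"
    using s c by (intro mult_right_mono mult_left_mono) auto
  finally have "y * (cos (y/2))\<^sup>2 \<le> sin y" by (simp add: power2_eq_square)
  moreover have "(cos (y/2))\<^sup>2 = (1 + cos y) / 2"
    using cos_double_sin[of "y/2"] by (simp add: cos_squared_eq)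
  moreover have "0 \<le> cos y" using assms by (intro cos_ge_zero) auto
  ultimately have "y * ((1 + cos y)/2) \<le> sin y" by simp
  moreover have "y / 2 \<le> y * ((1 + cos y)/2)" using assms \<open>0 \<le> cos y\<close>
    by (simp add: field_simps mult_left_mono)
  ultimately show ?thesis by simp
qed

lemma abs_abs_le_sin:
  fixes t s :: real
  assumes "\<bar>t\<bar> \<le> pi" "\<bar>s\<bar> \<le> pi"
  shows "\<bar>\<bar>t\<bar> - \<bar>s\<bar>\<bar> \<le> 4 * \<bar>sin ((t - s)/2)\<bar>"
proof -
  define d where "d = \<bar>t - s\<bar>"
  have d0: "0 \<le> d" "d \<le> 2*pi" using assms by (auto simp: d_def)
  have sd: "\<bar>sin ((t - s)/2)\<bar> = sin (d/2)"
  proof (cases "t - s \<ge> 0")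
    case True
    then show ?thesis using d0 by (simp add: d_def sin_ge_zero)
  next
    case False
    then have "(t - s)/2 = - (d/2)" unfolding d_def by arith
    then show ?thesis using d0 by (simp add: sin_ge_zero)
  qed
  have A: "\<bar>\<bar>t\<bar> - \<bar>s\<bar>\<bar> \<le> d" by (simp add: d_def)
  have B: "\<bar>\<bar>t\<bar> - \<bar>s\<bar>\<bar> \<le> 2*pi - d" using assms unfolding d_def by arith
  show ?thesis
  proof (cases "d \<le> pi")
    case True
    then have "d/2/2 \<le> sin (d/2)" using d0 by (intro sin_ge_half) auto
    then show ?thesis using A sd by simp
  next
    case False
    have "(pi - d/2)/2 \<le> sin (pi - d/2)" using False d0 by (intro sin_ge_half) auto
    then have "(pi - d/2)/2 \<le> sin (d/2)" by simp
    then show ?thesis using B sd by simp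
  qed
qed

lemma powr_unif:
  fixes a T e :: real
  assumes "0 < a" "0 < e"
  shows "\<exists>d>0. \<forall>u\<in>{0..T}. \<forall>v\<in>{0..T}. \<bar>u - v\<bar> < d \<longrightarrow> \<bar>u powr a - v powr a\<bar> < e"
proof -
  have "continuous_on {0..T} (\<lambda>t::real. \<bar>t\<bar> powr a)"
    using powr_abs_cont[OF assms(1)] continuous_on_subset by blast
  then have "uniformly_continuous_on {0..T} (\<lambda>t::real. \<bar>t\<bar> powr a)"
    by (rule compact_uniformly_continuous) simp
  then obtain d where d: "d > 0" "\<And>u v. u \<in> {0..T} \<Longrightarrow> v \<in> {0..T} \<Longrightarrow> dist v u < d \<Longrightarrow> dist (\<bar>v\<bar> powr a) (\<bar>u\<bar> powr a) < e"
    unfolding uniformly_continuous_on_def using assms(2) by metis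
  show ?thesis
  proof (intro exI[of _ d] conjI ballI impI)
    fix u v assume uv: "u \<in> {0..T}" "v \<in> {0..T}" "\<bar>u - v\<bar> < d"
    then have "dist (\<bar>u\<bar> powr a) (\<bar>v\<bar> powr a) < e" using d(2)[of v u] by (simp add: dist_real_def)
    then show "\<bar>u powr a - v powr a\<bar> < e" using uv by (simp add: dist_real_def)
  qed (fact d)
qed

lemma avg_sub:
  fixes X :: "nat \<Rightarrow> complex"
  assumes "0 < n"
  shows "(\<Sum>j<n. X j) / of_nat n - A = (\<Sum>j<n. (X j - A)) / of_nat n"
proof -
  have "(\<Sum>j<n. (X j - A)) = (\<Sum>j<n. X j) - of_nat n * A" by (simp add: sum_subtractf)
  then show ?thesis using assms by (simp add: diff_divide_distrib)
qed

lemma cesaro_double: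
  fixes a :: "int \<Rightarrow> complex"
  assumes ns: "(\<lambda>s. norm (a s)) summable_on UNIV"
  shows "(\<lambda>L::nat. (\<Sum>j<Suc L. \<Sum>k<Suc L. a (int j - int k)) / of_nat (Suc L)) \<longlonglongrightarrow> infsum a UNIV"
proof -
  have as: "a summable_on UNIV" using ns summable_on_iff_abs_summable_on_complex by blast
  define A where "A = infsum a UNIV"
  define S where "S = infsum (\<lambda>s. norm (a s)) UNIV"
  have sumS: "norm (sum a Y) \<le> S" if "finite Y" for Y
  proof -
    have "norm (sum a Y) \<le> sum (\<lambda>s. norm (a s)) Y" by (rule norm_sum)
    also have "\<dots> \<le> S" unfolding S_def by (rule finite_sum_le_infsum[OF ns that]) auto
    finally show ?thesis .
  qed
  have AS: "norm A \<le> S" unfolding A_def S_def by (rule norm_infsum_bound) (use ns in simp)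
  have S0: "0 \<le> S" using AS norm_ge_zero order_trans by blast
  show ?thesis
  proof (rule LIMSEQ_I)
    fix r :: real assume r: "0 < r"
    define e where "e = r / 2"
    have e0: "0 < e" using r by (simp add: e_def)
    have "(a has_sum A) UNIV" unfolding A_def using as by simp
    then have "\<forall>\<^sub>F F in finite_subsets_at_top UNIV. dist (sum a F) A < e"
      unfolding has_sum_def using e0 tendsto_iff by blast
    then obtain F0 where F0: "finite F0" "\<And>Y. finite Y \<Longrightarrow> F0 \<subseteq> Y \<Longrightarrow> dist (sum a Y) A < e"
      unfolding eventually_finite_subsets_at_top by auto
    obtain K :: nat where K: "F0 \<subseteq> {- int K .. int K}"
    proof -
      define K0 where "K0 = Max (insert 0 (abs ` F0))"
      have "\<forall>s\<in>F0. \<bar>s\<bar> \<le> K0" unfolding K0_def using F0(1) by (auto intro: Max_ge)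
      then show ?thesis using that[of "nat K0"] by force
    qed
    obtain L0 :: nat where L0: "4 * S * real K / e < real L0" using reals_Archimedean2 by blast
    show "\<exists>no. \<forall>L\<ge>no. norm ((\<Sum>j<Suc L. \<Sum>k<Suc L. a (int j - int k)) / of_nat (Suc L) - infsum a UNIV) < r"
    proof (intro exI[of _ L0] allI impI)
      fix L assume L: "L0 \<le> L"
      define E where "E = (\<lambda>j::nat. norm ((\<Sum>k<Suc L. a (int j - int k)) - A))"
      have Ej_all: "E j \<le> 2 * S" if "j < Suc L" for j
      proof -
        have "E j \<le> norm (\<Sum>k<Suc L. a (int j - int k)) + norm A" unfolding E_def by (rule norm_triangle_ineq4)
        also have "norm (\<Sum>k<Suc L. a (int j - int k)) = norm (sum a ((\<lambda>k. int j - int k) ` {..<Suc L}))"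
          by (subst sum.reindex) (auto simp: inj_on_def)
        also have "\<dots> \<le> S" by (rule sumS) simp
        finally show ?thesis using AS by simp
      qed
      have Ej_good: "E j < e" if "K \<le> j" "j + K \<le> L" for j
      proof -
        have "(\<Sum>k<Suc L. a (int j - int k)) = sum a ((\<lambda>k. int j - int k) ` {..<Suc L})"
          by (subst sum.reindex) (auto simp: inj_on_def)
        moreover have "F0 \<subseteq> (\<lambda>k. int j - int k) ` {..<Suc L}"
        proof
          fix s assume "s \<in> F0"
          then have s: "- int K \<le> s" "s \<le> int K" using K by auto
          have "s = int j - int (nat (int j - s))" using s that by simp
          moreover have "nat (int j - s) < Suc L" using s that by simp
          ultimately show "s \<in> (\<lambda>k. int j - int k) ` {..<Suc L}" by blast
        qed
        ultimately show ?thesis using F0(2)[of "(\<lambda>k. int j - int k) ` {..<Suc L}"]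
          unfolding E_def by (simp add: dist_norm)
      qed
      define Bad where "Bad = {..<K} \<union> {j. L < j + K \<and> j < Suc L}"
      have cardBad: "card Bad \<le> 2 * K"
      proof -
        have "{j. L < j + K \<and> j < Suc L} \<subseteq> {Suc L - K..<Suc L}" by auto
        then have "card {j. L < j + K \<and> j < Suc L} \<le> K"
          by (metis card_atLeastLessThan card_mono diff_diff_cancel diff_le_self finite_atLeastLessThan le_trans
               nat_le_linear)
        then show ?thesis unfolding Bad_def using card_Un_le[of "{..<K}" "{j. L < j + K \<and> j < Suc L}"] by simp
      qed
      have Ebound: "E j \<le> e + (if j \<in> Bad then 2 * S else 0)" if "j < Suc L" for j
        using Ej_all[OF that] Ej_good[of j] that e0 S0 unfolding Bad_def by (auto simp: not_less)
      have cardB: "real (card (Bad \<inter> {..<Suc L})) \<le> 2 * real K"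
      proof -
        have "card (Bad \<inter> {..<Suc L}) \<le> card Bad" by (rule card_mono) (auto simp: Bad_def)
        then show ?thesis using cardBad by linarith
      qed
      have "norm ((\<Sum>j<Suc L. \<Sum>k<Suc L. a (int j - int k)) / of_nat (Suc L) - A)
          = norm (\<Sum>j<Suc L. ((\<Sum>k<Suc L. a (int j - int k)) - A)) / real (Suc L)"
      proof -
        have "(\<Sum>j<Suc L. \<Sum>k<Suc L. a (int j - int k)) / of_nat (Suc L) - A
           = (\<Sum>j<Suc L. ((\<Sum>k<Suc L. a (int j - int k)) - A)) / of_nat (Suc L)"
          by (rule avg_sub) simp
        then show ?thesis by (simp only: norm_divide norm_of_nat)
      qed
      also have "\<dots> \<le> (\<Sum>j<Suc L. E j) / real (Suc L)"
        unfolding E_def by (intro divide_right_mono norm_sum) simp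
      also have "\<dots> \<le> (\<Sum>j<Suc L. e + (if j \<in> Bad then 2 * S else 0)) / real (Suc L)"
        by (intro divide_right_mono sum_mono Ebound) auto
      also have "(\<Sum>j<Suc L. e + (if j \<in> Bad then 2 * S else 0)) = real (Suc L) * e + 2 * S * real (card (Bad \<inter> {..<Suc L}))"
      proof -
        have "(\<Sum>j<Suc L. (if j \<in> Bad then 2 * S else 0)) = (\<Sum>j\<in>{..<Suc L} \<inter> Bad. 2 * S)"
          by (rule sum.inter_restrict[symmetric]) simp
        then show ?thesis by (simp add: sum.distrib Int_commute)
      qed
      also have "\<dots> / real (Suc L) \<le> (real (Suc L) * e + 2 * S * (2 * real K)) / real (Suc L)"
        using cardB S0 by (intro divide_right_mono add_left_mono mult_left_mono) auto
      also have "\<dots> = e + 4 * S * real K / real (Suc L)" by (simp add: field_simps)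
      also have "\<dots> < e + e"
      proof -
        have "4 * S * real K / e < real (Suc L)" using L0 L by linarith
        then show ?thesis using e0 by (simp add: field_simps)
      qed
      finally have "norm ((\<Sum>j<Suc L. \<Sum>k<Suc L. a (int j - int k)) / of_nat (Suc L) - A) < r"
        unfolding e_def by simp
      then show "norm ((\<Sum>j<Suc L. \<Sum>k<Suc L. a (int j - int k)) / of_nat (Suc L) - infsum a UNIV) < r"
        by (simp add: A_def)
    qed
  qed
qed

lemma integral_mult_left_c:
  fixes c :: complex
  assumes "f integrable_on S"
  shows "integral S (\<lambda>x. f x * c) = integral S f * c"
  using integral_unique[OF has_integral_mult_left[OF integrable_integral[OF assms], of c]] .

lemma integral_mult_right_c:
  fixes c :: complex
  assumes "f integrable_on S"
  shows "integral S (\<lambda>x. c * f x) = c * integral S f"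
  using integral_unique[OF has_integral_mult_right[OF integrable_integral[OF assms], of c]] .

lemma one_plus_of_nat_neq0 [simp]: "1 + (of_nat L :: complex) \<noteq> 0"
proof -
  have "(of_nat (Suc L) :: complex) \<noteq> 0" by (simp only: of_nat_eq_0_iff)
  then show ?thesis by simp
qed

definition PP :: "nat \<Rightarrow> real \<Rightarrow> complex" where
  "PP L u = (\<Sum>j<Suc L. cis (real j * u))"

definition FK :: "nat \<Rightarrow> real \<Rightarrow> complex" where
  "FK L u = (\<Sum>j<Suc L. \<Sum>k<Suc L. cis ((real j - real k) * u)) / of_nat (Suc L)"

definition FR :: "nat \<Rightarrow> real \<Rightarrow> real" where
  "FR L u = (cmod (PP L u))\<^sup>2 / real (Suc L)"

lemma FK_FR: "FK L u = complex_of_real (FR L u)"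
proof -
  have "PP L u * cnj (PP L u) = (\<Sum>j<Suc L. \<Sum>k<Suc L. cis (real j * u) * cis (- (real k * u)))"
    unfolding PP_def cnj_sum cis_cnj by (rule sum_product)
  also have "\<dots> = (\<Sum>j<Suc L. \<Sum>k<Suc L. cis ((real j - real k) * u))"
    by (simp add: cis_mult algebra_simps)
  finally have "(\<Sum>j<Suc L. \<Sum>k<Suc L. cis ((real j - real k) * u)) = complex_of_real ((cmod (PP L u))\<^sup>2)"
    by (metis complex_norm_square)
  then show ?thesis unfolding FK_def FR_def by simp
qed

lemma FR_nonneg: "0 \<le> FR L u"
  unfolding FR_def by simp

lemma cmod_cis_minus_1: "cmod (cis u - 1) = 2 * \<bar>sin (u/2)\<bar>"
proof -
  have "(cmod (cis u - 1))\<^sup>2 = (cos u - 1)\<^sup>2 + (sin u)\<^sup>2"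
    by (simp add: cmod_power2)
  also have "\<dots> = 2 - 2 * cos u" by (simp add: power2_eq_square algebra_simps sin_squared_eq)
  also have "\<dots> = (2 * \<bar>sin (u/2)\<bar>)\<^sup>2"
    using cos_double_sin[of "u/2"] by (simp add: power_mult_distrib)
  finally show ?thesis
    by (metis abs_ge_zero mult_nonneg_nonneg norm_ge_zero power2_eq_imp_eq zero_le_numeral)
qed

lemma PP_bound: "cmod (PP L u) * \<bar>sin (u/2)\<bar> \<le> 1"
proof -
  have pp: "PP L u = (\<Sum>j<Suc L. cis u ^ j)" unfolding PP_def by (simp add: Complex.DeMoivre)
  have "1 - cis u ^ Suc L = (1 - cis u) * PP L u" unfolding pp by (rule one_diff_power_eq)
  then have "cmod (1 - cis u ^ Suc L) = cmod (cis u - 1) * cmod (PP L u)"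
    by (metis norm_minus_commute norm_mult)
  moreover have "cmod (1 - cis u ^ Suc L) \<le> 2"
  proof -
    have "cmod (cis u ^ Suc L) = 1" by (simp only: norm_power norm_cis power_one)
    then show ?thesis using norm_triangle_ineq4[of 1 "cis u ^ Suc L"] by simp
  qed
  ultimately have "2 * \<bar>sin (u/2)\<bar> * cmod (PP L u) \<le> 2" by (simp add: cmod_cis_minus_1)
  then show ?thesis by (simp add: mult.commute)
qed

lemma FR_bound: "FR L u * (sin (u/2))\<^sup>2 \<le> 1 / real (Suc L)"
proof -
  have "(cmod (PP L u) * \<bar>sin (u/2)\<bar>)\<^sup>2 \<le> 1"
    using PP_bound[of L u] by (simp add: abs_square_le_1)
  then have "(cmod (PP L u))\<^sup>2 * (sin (u/2))\<^sup>2 \<le> 1" by (simp add: power_mult_distrib)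
  then have "(cmod (PP L u))\<^sup>2 * (sin (u/2))\<^sup>2 / real (Suc L) \<le> 1 / real (Suc L)"
    by (rule divide_right_mono) simp
  moreover have "FR L u * (sin (u/2))\<^sup>2 = (cmod (PP L u))\<^sup>2 * (sin (u/2))\<^sup>2 / real (Suc L)"
    unfolding FR_def by simp
  ultimately show ?thesis by simp
qed

lemma cis_vderiv:
  "((\<lambda>\<xi>. cis (w * (\<xi> - x))) has_vector_derivative (\<i> * of_real w * cis (w * (\<xi> - x)))) (at \<xi> within S)"
proof -
  have "((\<lambda>z. exp (\<i> * (of_real w * (z - of_real x)))) has_field_derivative
          (exp (\<i> * (of_real w * (of_real \<xi> - of_real x))) * (\<i> * of_real w))) (at (of_real \<xi>))"
    by (rule derivative_eq_intros refl | simp)+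
  from has_vector_derivative_real_field[OF this, of S]
  show ?thesis by (simp add: cis_conv_exp mult.commute mult.left_commute)
qed

lemma cont_fcis: "0 < \<alpha> \<Longrightarrow> continuous_on UNIV g \<Longrightarrow>
   continuous_on UNIV (\<lambda>\<xi>::real. complex_of_real (\<bar>\<xi>\<bar> powr \<alpha>) * cis (g \<xi>))"
  by (intro continuous_on_mult continuous_on_of_real powr_abs_cont continuous_intros) auto

lemma int_fcis: "0 < \<alpha> \<Longrightarrow> continuous_on UNIV g \<Longrightarrow>
   (\<lambda>\<xi>::real. complex_of_real (\<bar>\<xi>\<bar> powr \<alpha>) * cis (g \<xi>)) integrable_on {a..b}"
  by (rule integrable_continuous_interval, rule continuous_on_subset[OF cont_fcis]) auto

lemma cis_int:
  fixes h x :: real and m :: int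
  assumes h: "0 < h"
  shows "((\<lambda>\<xi>. cis (real_of_int m * (h * (\<xi> - x)))) has_integral
           (if m = 0 then complex_of_real (2*pi/h) else 0)) {-pi/h..pi/h}"
proof (cases "m = 0")
  case True
  have "((\<lambda>\<xi>::real. 1::complex) has_integral complex_of_real (2*pi/h)) {-pi/h..pi/h}"
    using has_integral_const_real[of "1::complex" "-pi/h" "pi/h"] h by (simp add: scaleR_conv_of_real)
  then show ?thesis using True by simp
next
  case False
  define w where "w = real_of_int m * h"
  have w0: "w \<noteq> 0" using False h by (simp add: w_def)
  define F where "F = (\<lambda>\<xi>. cis (w * (\<xi> - x)) / (\<i> * of_real w))"
  have ab: "-pi/h \<le> pi/h" using h by (simp add: divide_right_mono)
  have "((\<lambda>\<xi>. cis (w * (\<xi> - x))) has_integral (F (pi/h) - F (-pi/h))) {-pi/h..pi/h}"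
  proof (rule fundamental_theorem_of_calculus[OF ab])
    fix \<xi> :: real
    have "((\<lambda>\<xi>. cis (w * (\<xi> - x)) / (\<i> * of_real w)) has_vector_derivative
           (\<i> * of_real w * cis (w * (\<xi> - x))) / (\<i> * of_real w)) (at \<xi> within {-pi/h..pi/h})"
      by (rule has_vector_derivative_divide[OF cis_vderiv])
    then show "(F has_vector_derivative cis (w * (\<xi> - x))) (at \<xi> within {-pi/h..pi/h})"
      using w0 unfolding F_def by simp
  qed
  moreover have "F (pi/h) = F (-pi/h)"
  proof -
    have "w * (pi/h - x) = w * (-pi/h - x) + 2 * pi * real_of_int m"
      using h by (simp add: w_def field_simps)
    then have "cis (w * (pi/h - x)) = cis (w * (-pi/h - x)) * cis (2 * pi * real_of_int m)"
      by (subst cis_mult) simp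
    moreover have "cis (2 * pi * real_of_int m) = 1" by (rule cis_multiple_2pi) simp
    ultimately show ?thesis unfolding F_def by simp
  qed
  moreover have "(\<lambda>\<xi>. cis (real_of_int m * (h * (\<xi> - x)))) = (\<lambda>\<xi>. cis (w * (\<xi> - x)))"
    by (simp add: w_def mult.assoc)
  ultimately show ?thesis using False by simp
qed

definition sig :: "real \<Rightarrow> real \<Rightarrow> nat \<Rightarrow> real \<Rightarrow> complex" where
  "sig h \<alpha> L x = complex_of_real (h / (2*pi)) *
     integral {-pi/h..pi/h} (\<lambda>\<xi>. complex_of_real (\<bar>\<xi>\<bar> powr \<alpha>) * FK L (h * (\<xi> - x)))"

lemma sig_expand:
  assumes h: "0 < h" and a: "0 < \<alpha>"
  shows "sig h \<alpha> L x = (\<Sum>j<Suc L. \<Sum>k<Suc L. kernel_c h \<alpha> (int j - int k)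
            * cis (- (real_of_int (int j - int k) * h * x))) / of_nat (Suc L)"
proof -
  define S where "S = {-pi/h..pi/h}"
  define g where "g = (\<lambda>(j::nat) (k::nat) \<xi>. complex_of_real (\<bar>\<xi>\<bar> powr \<alpha>) * cis (\<xi> * h * real_of_int (int j - int k)))"
  have gi: "g j k integrable_on S" for j k
    unfolding g_def S_def by (rule int_fcis[OF a]) (intro continuous_intros)
  have gI: "integral S (g j k) = complex_of_real (2*pi/h) * kernel_c h \<alpha> (int j - int k)" for j k
    unfolding kernel_c_def g_def S_def using h by simp
  have pt: "complex_of_real (\<bar>\<xi>\<bar> powr \<alpha>) * FK L (h * (\<xi> - x))
       = (\<Sum>j<Suc L. \<Sum>k<Suc L. g j k \<xi> * cis (- (real_of_int (int j - int k) * h * x))) * (1 / of_nat (Suc L))" for \<xi>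
  proof -
    have "cis ((real j - real k) * (h * (\<xi> - x))) = cis (\<xi> * h * real_of_int (int j - int k)) * cis (- (real_of_int (int j - int k) * h * x))" for j k
      by (simp add: cis_mult algebra_simps)
    then show ?thesis unfolding FK_def g_def
      by (simp add: sum_distrib_left mult.assoc del: sum.lessThan_Suc)
  qed
  have "integral S (\<lambda>\<xi>. complex_of_real (\<bar>\<xi>\<bar> powr \<alpha>) * FK L (h * (\<xi> - x)))
      = integral S (\<lambda>\<xi>. (\<Sum>j<Suc L. \<Sum>k<Suc L. g j k \<xi> * cis (- (real_of_int (int j - int k) * h * x)))) * (1 / of_nat (Suc L))"
    unfolding pt
    by (rule integral_mult_left_c)
       (intro integrable_sum integrable_on_mult_left gi finite_lessThan)
  also have "integral S (\<lambda>\<xi>. (\<Sum>j<Suc L. \<Sum>k<Suc L. g j k \<xi> * cis (- (real_of_int (int j - int k) * h * x))))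
     = (\<Sum>j<Suc L. \<Sum>k<Suc L. integral S (g j k) * cis (- (real_of_int (int j - int k) * h * x)))"
    by (simp add: integral_sum integrable_sum integrable_on_mult_left gi integral_mult_left_c del: sum.lessThan_Suc)
  finally show ?thesis
    unfolding sig_def S_def[symmetric] gI using h
    by (simp add: sum_distrib_left sum_divide_distrib mult.assoc del: sum.lessThan_Suc)
qed

lemma FK_cont: "continuous_on UNIV (\<lambda>\<xi>. FK L (h * (\<xi> - x)))"
  unfolding FK_def by (intro continuous_intros) auto

lemma FK_int: "(\<lambda>\<xi>. FK L (h * (\<xi> - x))) integrable_on {a..b}"
  by (rule integrable_continuous_interval, rule continuous_on_subset[OF FK_cont]) auto

lemma FK_integral:
  assumes h: "0 < h"
  shows "integral {-pi/h..pi/h} (\<lambda>\<xi>. FK L (h * (\<xi> - x))) = complex_of_real (2*pi/h)"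
proof -
  define S where "S = {-pi/h..pi/h}"
  have ci: "integral S (\<lambda>\<xi>. cis ((real j - real k) * (h * (\<xi> - x)))) = (if j = k then complex_of_real (2*pi/h) else 0)" for j k
  proof -
    have "real j - real k = real_of_int (int j - int k)" by simp
    then show ?thesis using integral_unique[OF cis_int[OF h, of "int j - int k" x]] unfolding S_def by simp
  qed
  have cii: "(\<lambda>\<xi>. cis ((real j - real k) * (h * (\<xi> - x)))) integrable_on S" for j k
    unfolding S_def by (intro integrable_continuous_interval continuous_intros)
  have "integral S (\<lambda>\<xi>. FK L (h * (\<xi> - x)))
     = integral S (\<lambda>\<xi>. (\<Sum>j<Suc L. \<Sum>k<Suc L. cis ((real j - real k) * (h * (\<xi> - x)))) * (1 / of_nat (Suc L)))"
    unfolding FK_def by (simp add: divide_inverse del: sum.lessThan_Suc)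
  also have "\<dots> = (\<Sum>j<Suc L. \<Sum>k<Suc L. integral S (\<lambda>\<xi>. cis ((real j - real k) * (h * (\<xi> - x))))) * (1 / of_nat (Suc L))"
    by (simp add: integral_mult_left_c integrable_sum cii integral_sum del: sum.lessThan_Suc)
  also have "\<dots> = complex_of_real (2*pi/h)"
    unfolding ci by (simp add: sum.delta del: sum.lessThan_Suc)
  finally show ?thesis unfolding S_def .
qed

lemma FR_cont: "continuous_on UNIV (\<lambda>\<xi>. FR L (h * (\<xi> - x)))"
  unfolding FR_def PP_def by (intro continuous_intros) auto

lemma FR_int: "(\<lambda>\<xi>. FR L (h * (\<xi> - x))) integrable_on {a..b}"
  by (rule integrable_continuous_interval, rule continuous_on_subset[OF FR_cont]) auto

lemma FR_integral:
  assumes h: "0 < h"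
  shows "integral {-pi/h..pi/h} (\<lambda>\<xi>. FR L (h * (\<xi> - x))) = 2*pi/h"
proof -
  have "complex_of_real (integral {-pi/h..pi/h} (\<lambda>\<xi>. FR L (h * (\<xi> - x))))
        = integral {-pi/h..pi/h} (\<lambda>\<xi>. FK L (h * (\<xi> - x)))"
    unfolding FK_FR by (rule integral_of_real_HK[symmetric, OF FR_int])
  then show ?thesis using FK_integral[OF h, of L x] by (metis of_real_eq_iff)
qed

lemma ring_id: "a*b - c*(a*d) = (a::complex)*(b - c*d)" by (simp add: algebra_simps)

lemma fejer_conv:
  assumes h: "0 < h" and a: "0 < \<alpha>" and x: "x \<in> {-pi/h..pi/h}"
  shows "(\<lambda>L. sig h \<alpha> L x) \<longlonglongrightarrow> complex_of_real (\<bar>x\<bar> powr \<alpha>)"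
proof (rule LIMSEQ_I)
  fix r :: real assume r: "0 < r"
  define T where "T = pi / h"
  have T0: "0 < T" using h by (simp add: T_def)
  define S where "S = {-pi/h..pi/h}"
  have ST: "S = {-T..T}" by (simp add: S_def T_def)
  define f where "f = (\<lambda>\<xi>::real. \<bar>\<xi>\<bar> powr \<alpha>)"
  define e where "e = r / 3"
  have e0: "0 < e" using r by (simp add: e_def)
  obtain d where d0: "0 < d" and d: "\<And>u v. u \<in> {0..T} \<Longrightarrow> v \<in> {0..T} \<Longrightarrow> \<bar>u - v\<bar> < d \<Longrightarrow> \<bar>u powr \<alpha> - v powr \<alpha>\<bar> < e"
    using powr_unif[OF a e0, of T] by blast
  define \<eta> where "\<eta> = (d * h / 4)\<^sup>2"
  have \<eta>0: "0 < \<eta>" using d0 h by (simp add: \<eta>_def)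
  have xT: "\<bar>x\<bar> \<le> T" using x by (auto simp: T_def)
  have close: "\<bar>f \<xi> - f x\<bar> < e" if \<xi>: "\<xi> \<in> S" and sn: "(sin (h * (\<xi> - x) / 2))\<^sup>2 < \<eta>" for \<xi>
  proof -
    have \<xi>T: "\<bar>\<xi>\<bar> \<le> T" using \<xi> by (auto simp: ST)
    have "\<bar>h * \<xi>\<bar> \<le> pi" "\<bar>h * x\<bar> \<le> pi" using \<xi>T xT h by (auto simp: T_def abs_mult field_simps)
    from abs_abs_le_sin[OF this]
    have "\<bar>\<bar>h * \<xi>\<bar> - \<bar>h * x\<bar>\<bar> \<le> 4 * \<bar>sin ((h * \<xi> - h * x) / 2)\<bar>" .
    moreover have "\<bar>\<bar>h * \<xi>\<bar> - \<bar>h * x\<bar>\<bar> = h * \<bar>\<bar>\<xi>\<bar> - \<bar>x\<bar>\<bar>"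
      using h by (simp add: abs_mult right_diff_distrib[symmetric])
    moreover have "\<bar>sin ((h * \<xi> - h * x) / 2)\<bar> < h * d / 4"
    proof -
      have "\<bar>sin (h * (\<xi> - x) / 2)\<bar>\<^sup>2 < (d * h / 4)\<^sup>2" using sn by (simp add: \<eta>_def)
      then have "\<bar>sin (h * (\<xi> - x) / 2)\<bar> < d * h / 4" by (rule power2_less_imp_less) (use d0 h in simp)
      then show ?thesis using d0 h by (simp add: right_diff_distrib mult.commute)
    qed
    ultimately have "h * \<bar>\<bar>\<xi>\<bar> - \<bar>x\<bar>\<bar> < h * d" by linarith
    then have "\<bar>\<bar>\<xi>\<bar> - \<bar>x\<bar>\<bar> < d" using h by simp
    then show ?thesis unfolding f_def using d[of "\<bar>\<xi>\<bar>" "\<bar>x\<bar>"] \<xi>T xT by simp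
  qed
  define B where "B = 2 * T powr \<alpha>"
  have Bb: "\<bar>f \<xi> - f x\<bar> \<le> B" if \<xi>: "\<xi> \<in> S" for \<xi>
  proof -
    have "f \<xi> \<le> T powr \<alpha>" "f x \<le> T powr \<alpha>" using \<xi> xT a by (auto simp: f_def ST intro!: powr_mono2)
    moreover have "0 \<le> f \<xi>" "0 \<le> f x" by (auto simp: f_def)
    ultimately show ?thesis unfolding B_def by linarith
  qed
  have B0: "0 \<le> B" unfolding B_def by simp
  obtain L0 :: nat where L0: "B / (\<eta> * e) < real L0" using reals_Archimedean2 by blast
  show "\<exists>no. \<forall>L\<ge>no. norm (sig h \<alpha> L x - complex_of_real (\<bar>x\<bar> powr \<alpha>)) < r"
  proof (intro exI[of _ L0] allI impI)
    fix L assume L: "L0 \<le> L"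
    define C where "C = B / (real (Suc L) * \<eta>)"
    have C0: "0 \<le> C" using B0 \<eta>0 by (simp add: C_def)
    have Ce: "C < e"
    proof -
      have "B / (\<eta> * e) < real (Suc L)" using L0 L by linarith
      then have "B < real (Suc L) * \<eta> * e" using \<eta>0 e0 by (simp add: field_simps)
      then have "B < e * (real (Suc L) * \<eta>)" by (simp add: algebra_simps)
      moreover have D0: "0 < real (Suc L) * \<eta>" using \<eta>0 by simp
      ultimately show ?thesis unfolding C_def using pos_divide_less_eq[OF D0] by blast
    qed
    define u where "u = (\<lambda>\<xi>. h * (\<xi> - x))"
    have pw: "\<bar>f \<xi> - f x\<bar> * FR L (u \<xi>) \<le> e * FR L (u \<xi>) + C" if \<xi>: "\<xi> \<in> S" for \<xi>
    proof (cases "(sin (u \<xi> / 2))\<^sup>2 < \<eta>")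
      case True
      then have "\<bar>f \<xi> - f x\<bar> \<le> e" using close[OF \<xi>] by (simp add: u_def)
      then have "\<bar>f \<xi> - f x\<bar> * FR L (u \<xi>) \<le> e * FR L (u \<xi>)"
        using FR_nonneg by (intro mult_right_mono) auto
      then show ?thesis using C0 by simp
    next
      case False
      have FRb: "FR L (u \<xi>) \<le> 1 / (real (Suc L) * \<eta>)"
      proof -
        have "FR L (u \<xi>) * \<eta> \<le> FR L (u \<xi>) * (sin (u \<xi> / 2))\<^sup>2"
          using False FR_nonneg by (intro mult_left_mono) auto
        also have "\<dots> \<le> 1 / real (Suc L)" by (rule FR_bound)
        finally have "FR L (u \<xi>) * \<eta> \<le> 1 / real (Suc L)" .
        then have "FR L (u \<xi>) * (real (Suc L) * \<eta>) \<le> 1"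
          by (simp add: field_simps del: of_nat_Suc)
        moreover have D0: "0 < real (Suc L) * \<eta>" using \<eta>0 by simp
        ultimately show ?thesis using pos_le_divide_eq[OF D0] by blast
      qed
      have "\<bar>f \<xi> - f x\<bar> * FR L (u \<xi>) \<le> B * (1 / (real (Suc L) * \<eta>))"
        using Bb[OF \<xi>] FRb FR_nonneg B0 by (intro mult_mono) auto
      also have "\<dots> = C" by (simp add: C_def)
      finally show ?thesis using e0 FR_nonneg[of L "u \<xi>"] by (simp add: add_increasing)
    qed
    have intA: "(\<lambda>\<xi>. complex_of_real (f \<xi>) * FK L (u \<xi>)) integrable_on S"
      unfolding S_def f_def u_def
      by (rule integrable_continuous_interval)
         (intro continuous_on_mult continuous_on_of_real continuous_on_subset[OF powr_abs_cont[OF a]]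
            continuous_on_subset[OF FK_cont], auto)
    have intB: "(\<lambda>\<xi>. FK L (u \<xi>)) integrable_on S" unfolding S_def u_def by (rule FK_int)
    have IB: "integral S (\<lambda>\<xi>. FK L (u \<xi>)) = complex_of_real (2*pi/h)"
      unfolding S_def u_def by (rule FK_integral[OF h])
    have "sig h \<alpha> L x - complex_of_real (f x)
        = complex_of_real (h / (2*pi)) * (integral S (\<lambda>\<xi>. complex_of_real (f \<xi>) * FK L (u \<xi>))
             - complex_of_real (f x) * integral S (\<lambda>\<xi>. FK L (u \<xi>)))"
    proof -
      have sigS: "sig h \<alpha> L x = complex_of_real (h / (2*pi)) * integral S (\<lambda>\<xi>. complex_of_real (f \<xi>) * FK L (u \<xi>))"
        unfolding sig_def S_def f_def u_def by simp
      have "h / (2*pi) * (2*pi/h) = 1" using h by simp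
      then have cI: "complex_of_real (h / (2*pi)) * complex_of_real (2*pi/h) = 1" by (metis of_real_mult of_real_1)
      have "sig h \<alpha> L x - complex_of_real (f x) = complex_of_real (h / (2*pi)) * integral S (\<lambda>\<xi>. complex_of_real (f \<xi>) * FK L (u \<xi>))
          - complex_of_real (f x) * (complex_of_real (h / (2*pi)) * complex_of_real (2*pi/h))"
        unfolding sigS cI by simp
      also have "\<dots> = complex_of_real (h / (2*pi)) * (integral S (\<lambda>\<xi>. complex_of_real (f \<xi>) * FK L (u \<xi>))
             - complex_of_real (f x) * complex_of_real (2*pi/h))"
        by (rule ring_id)
      finally show ?thesis unfolding IB .
    qed
    also have "integral S (\<lambda>\<xi>. complex_of_real (f \<xi>) * FK L (u \<xi>))
             - complex_of_real (f x) * integral S (\<lambda>\<xi>. FK L (u \<xi>))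
           = integral S (\<lambda>\<xi>. complex_of_real (f \<xi> - f x) * FK L (u \<xi>))"
    proof -
      have "integral S (\<lambda>\<xi>. complex_of_real (f \<xi> - f x) * FK L (u \<xi>))
          = integral S (\<lambda>\<xi>. complex_of_real (f \<xi>) * FK L (u \<xi>) - complex_of_real (f x) * FK L (u \<xi>))"
        by (simp add: algebra_simps)
      also have "\<dots> = integral S (\<lambda>\<xi>. complex_of_real (f \<xi>) * FK L (u \<xi>))
            - integral S (\<lambda>\<xi>. complex_of_real (f x) * FK L (u \<xi>))"
        by (rule integral_diff[OF intA integrable_on_mult_right[OF intB]])
      also have "integral S (\<lambda>\<xi>. complex_of_real (f x) * FK L (u \<xi>)) = complex_of_real (f x) * integral S (\<lambda>\<xi>. FK L (u \<xi>))"
        by (rule integral_mult_right_c[OF intB])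
      finally show ?thesis by simp
    qed
    finally have eq: "sig h \<alpha> L x - complex_of_real (f x)
       = complex_of_real (h / (2*pi)) * integral S (\<lambda>\<xi>. complex_of_real (f \<xi> - f x) * FK L (u \<xi>))" .
    have intFR: "(\<lambda>\<xi>. FR L (u \<xi>)) integrable_on S" unfolding S_def u_def by (rule FR_int)
    have IFR: "integral S (\<lambda>\<xi>. FR L (u \<xi>)) = 2*pi/h" unfolding S_def u_def by (rule FR_integral[OF h])
    have intG: "(\<lambda>\<xi>. complex_of_real (f \<xi> - f x) * FK L (u \<xi>)) integrable_on S"
    proof -
      have "(\<lambda>\<xi>. complex_of_real (f \<xi>) * FK L (u \<xi>) - complex_of_real (f x) * FK L (u \<xi>)) integrable_on S"
        by (rule integrable_diff[OF intA integrable_on_mult_right[OF intB]])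
      then show ?thesis by (simp add: left_diff_distrib)
    qed
    have intR: "(\<lambda>\<xi>. e * FR L (u \<xi>) + C) integrable_on S"
    proof -
      have "(\<lambda>\<xi>. e * FR L (u \<xi>)) integrable_on S" by (rule integrable_on_mult_right[OF intFR])
      moreover have "(\<lambda>\<xi>. C) integrable_on S" unfolding S_def by (intro integrable_continuous_interval continuous_intros)
      ultimately show ?thesis by (rule integrable_add)
    qed
    have "norm (integral S (\<lambda>\<xi>. complex_of_real (f \<xi> - f x) * FK L (u \<xi>)))
        \<le> integral S (\<lambda>\<xi>. e * FR L (u \<xi>) + C)"
    proof (rule integral_norm_bound_integral[OF intG intR])
      fix \<xi> assume "\<xi> \<in> S"
      then show "norm (complex_of_real (f \<xi> - f x) * FK L (u \<xi>)) \<le> e * FR L (u \<xi>) + C"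
        using pw[of \<xi>] FR_nonneg[of L "u \<xi>"] unfolding FK_FR norm_mult norm_of_real by simp
    qed
    also have "integral S (\<lambda>\<xi>. e * FR L (u \<xi>) + C) = e * (2*pi/h) + C * (2*pi/h)"
    proof -
      have "integral S (\<lambda>\<xi>. e * FR L (u \<xi>) + C) = integral S (\<lambda>\<xi>. e * FR L (u \<xi>)) + integral S (\<lambda>\<xi>. C)"
        by (rule integral_add[OF integrable_on_mult_right[OF intFR]]) (unfold S_def, intro integrable_continuous_interval continuous_intros)
      moreover have "integral S (\<lambda>\<xi>. e * FR L (u \<xi>)) = e * (2*pi/h)"
        using integral_mult[OF intFR, of e] IFR by simp
      moreover have "integral S (\<lambda>\<xi>. C) = C * (2*pi/h)" unfolding S_def using h by simp
      ultimately show ?thesis by simp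
    qed
    also have "e * (2*pi/h) + C * (2*pi/h) = (e + C) * (2*pi/h)" by (simp only: distrib_right)
    finally have nb: "norm (integral S (\<lambda>\<xi>. complex_of_real (f \<xi> - f x) * FK L (u \<xi>))) \<le> (e + C) * (2*pi/h)" .
    have "norm (sig h \<alpha> L x - complex_of_real (f x)) = h / (2*pi) * norm (integral S (\<lambda>\<xi>. complex_of_real (f \<xi> - f x) * FK L (u \<xi>)))"
      unfolding eq norm_mult norm_of_real using h by simp
    also have "\<dots> \<le> h / (2*pi) * ((e + C) * (2*pi/h))"
      using nb h by (intro mult_left_mono) auto
    also have "\<dots> = e + C" using h by simp
    also have "\<dots> < r" using Ce e0 unfolding e_def by simp
    finally show "norm (sig h \<alpha> L x - complex_of_real (\<bar>x\<bar> powr \<alpha>)) < r" by (simp add: f_def)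
  qed
qed

lemma infsum_finsum:
  fixes f :: "'k \<Rightarrow> 'a \<Rightarrow> complex"
  assumes "finite K" "\<And>k. k \<in> K \<Longrightarrow> f k summable_on A"
  shows "(\<lambda>x. \<Sum>k\<in>K. f k x) summable_on A \<and> infsum (\<lambda>x. \<Sum>k\<in>K. f k x) A = (\<Sum>k\<in>K. infsum (f k) A)"
  using assms
proof (induction K rule: finite_induct)
  case empty
  then show ?case by simp
next
  case (insert k K)
  then have IH: "(\<lambda>x. \<Sum>k\<in>K. f k x) summable_on A" "infsum (\<lambda>x. \<Sum>k\<in>K. f k x) A = (\<Sum>k\<in>K. infsum (f k) A)"
    by auto
  have fk: "f k summable_on A" using insert by auto
  have "(\<lambda>x. f k x + (\<Sum>k\<in>K. f k x)) summable_on A" by (rule summable_on_add[OF fk IH(1)])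
  moreover have "infsum (\<lambda>x. f k x + (\<Sum>k\<in>K. f k x)) A = infsum (f k) A + (\<Sum>k\<in>K. infsum (f k) A)"
    using infsum_add[OF fk IH(1)] IH(2) by simp
  ultimately show ?case using insert by simp
qed

lemma inversion:
  assumes h: "0 < h" and a: "0 < \<alpha>" and a2: "\<alpha> \<le> 2" and x: "x \<in> {-pi/h..pi/h}"
  shows "infsum (\<lambda>s. kernel_c h \<alpha> s * cis (- (real_of_int s * h * x))) UNIV = complex_of_real (\<bar>x\<bar> powr \<alpha>)"
proof -
  define a where "a = (\<lambda>s. kernel_c h \<alpha> s * cis (- (real_of_int s * h * x)))"
  have ns: "(\<lambda>s. norm (a s)) summable_on UNIV"
    unfolding a_def norm_mult norm_cis using kernel_c_summable(1)[OF h a a2] by simp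
  have "(\<lambda>L. sig h \<alpha> L x) \<longlonglongrightarrow> infsum a UNIV"
    unfolding sig_expand[OF h a, abs_def] using cesaro_double[OF ns] unfolding a_def .
  moreover have "(\<lambda>L. sig h \<alpha> L x) \<longlonglongrightarrow> complex_of_real (\<bar>x\<bar> powr \<alpha>)"
    by (rule fejer_conv[OF h a x])
  ultimately show ?thesis unfolding a_def by (rule LIMSEQ_unique)
qed

lemma kernel_c_even:
  assumes h: "0 < h" and a: "0 < \<alpha>"
  shows "kernel_c h \<alpha> (- r) = kernel_c h \<alpha> r"
  unfolding kernel_c_cos[OF h a] by simp

lemma cis_eq_1_dvd:
  fixes n :: int and M :: nat
  assumes M: "0 < M" and c: "cis (2 * pi * real_of_int n / real M) = 1"
  shows "int M dvd n"
proof -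
  have "cos (2 * pi * real_of_int n / real M) = 1" using c by (metis cis.sel(1) one_complex.sel(1))
  then obtain k :: int where k: "2 * pi * real_of_int n / real M = real_of_int k * 2 * pi"
    using cos_one_2pi_int by blast
  then have "real_of_int n = real_of_int k * real M" using M by (simp add: field_simps)
  then have "n = k * int M" by (metis of_int_eq_iff of_int_mult of_int_of_nat_eq)
  then show ?thesis by simp
qed

lemma discrete_orth:
  fixes n :: int and M :: nat
  assumes M: "0 < M"
  shows "(\<Sum>k<M. cis (2 * pi * real_of_int n * real k / real M)) = (if int M dvd n then of_nat M else 0)"
proof -
  define z where "z = cis (2 * pi * real_of_int n / real M)"
  have zk: "cis (2 * pi * real_of_int n * real k / real M) = z ^ k" for k
    unfolding z_def Complex.DeMoivre by (simp add: field_simps)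
  have zM: "z ^ M = 1"
  proof -
    have "z ^ M = cis (2 * pi * real_of_int n)" unfolding z_def Complex.DeMoivre using M by simp
    also have "\<dots> = 1" by (rule cis_multiple_2pi) simp
    finally show ?thesis .
  qed
  show ?thesis
  proof (cases "int M dvd n")
    case True
    then obtain q where q: "n = int M * q" by (auto elim: dvdE)
    have "2 * pi * real_of_int n / real M = 2 * pi * real_of_int q" unfolding q using M by simp
    then have "z = cis (2 * pi * real_of_int q)" unfolding z_def by simp
    also have "\<dots> = 1" by (rule cis_multiple_2pi) simp
    finally have "z = 1" .
    then show ?thesis unfolding zk using True by simp
  next
    case False
    then have "z \<noteq> 1" using cis_eq_1_dvd[OF M] unfolding z_def by blast
    have "1 - z ^ M = (1 - z) * (\<Sum>k<M. z ^ k)" by (rule one_diff_power_eq)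
    then have "(1 - z) * (\<Sum>k<M. z ^ k) = 0" using zM by simp
    then have "(\<Sum>k<M. z ^ k) = 0" using \<open>z \<noteq> 1\<close> by simp
    then show ?thesis unfolding zk using False by simp
  qed
qed

lemma kc_cis_summable:
  assumes h: "0 < h" and a: "0 < \<alpha>" and a2: "\<alpha> \<le> 2"
  shows "(\<lambda>s. kernel_c h \<alpha> s * cis (g s)) summable_on A"
proof -
  have "(\<lambda>s. norm (kernel_c h \<alpha> s * cis (g s))) summable_on UNIV"
    unfolding norm_mult norm_cis using kernel_c_summable(1)[OF h a a2] by simp
  then have "(\<lambda>s. kernel_c h \<alpha> s * cis (g s)) summable_on UNIV"
    using summable_on_iff_abs_summable_on_complex by blast
  then show ?thesis by (rule summable_on_subset) simp
qed

lemma xi_bar_range: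
  assumes h: "0 < h" and M: "0 < M" "even M" and k: "k < M"
  shows "xi_bar h M k \<in> {-pi/h..pi/h}"
    and "cis (- (real_of_int s * h * xi_bar h M k)) = cis (- (2 * pi * real_of_int s * real k / real M))"
proof -
  have Mr: "0 < real M" using M by simp
  show "xi_bar h M k \<in> {-pi/h..pi/h}"
  proof (cases "k < M div 2")
    case True
    then have "2 * real k \<le> real M" using M by (auto elim!: evenE)
    then have "2 * pi * real k / (real M * h) \<le> pi / h"
      using h Mr by (simp add: field_simps)
    moreover have "0 \<le> 2 * pi * real k / (real M * h)" using h Mr by simp
    moreover have "- pi / h \<le> 0" using h by simp
    moreover have "xi_bar h M k = 2 * pi * real k / (real M * h)" using True by (simp add: xi_bar_def)
    ultimately show ?thesis unfolding atLeastAtMost_iff by linarith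
  next
    case False
    then have k2: "real M \<le> 2 * real k" using M by (auto elim!: evenE)
    have "-pi/h \<le> 2 * pi * real k / (real M * h) - 2 * pi / h"
    proof -
      have "pi * real M \<le> pi * (2 * real k)" using k2 by (simp add: mult_left_mono)
      then show ?thesis using h Mr by (simp add: field_simps)
    qed
    moreover have "2 * pi * real k / (real M * h) - 2 * pi / h \<le> pi / h"
    proof -
      have "real k \<le> real M" using k by simp
      then have "pi * real k \<le> pi * real M" by (simp add: mult_left_mono)
      then show ?thesis using h Mr by (simp add: field_simps)
    qed
    ultimately show ?thesis using False by (simp add: xi_bar_def)
  qed
  show "cis (- (real_of_int s * h * xi_bar h M k)) = cis (- (2 * pi * real_of_int s * real k / real M))"
  proof (cases "k < M div 2")
    case True
    then show ?thesis using h Mr by (simp add: xi_bar_def field_simps)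
  next
    case False
    have "- (real_of_int s * h * xi_bar h M k) = - (2 * pi * real_of_int s * real k / real M) + 2 * pi * real_of_int s"
      using False h Mr by (simp add: xi_bar_def field_simps)
    then have "cis (- (real_of_int s * h * xi_bar h M k)) = cis (- (2 * pi * real_of_int s * real k / real M)) * cis (2 * pi * real_of_int s)"
      by (metis cis_mult)
    moreover have "cis (2 * pi * real_of_int s) = 1" by (rule cis_multiple_2pi) simp
    ultimately show ?thesis by simp
  qed
qed

lemma aliasing:
  assumes h: "0 < h" and a: "0 < \<alpha>" and a2: "\<alpha> \<le> 2" and M: "0 < M" "even M"
  shows "(\<Sum>k<M. complex_of_real (\<bar>xi_bar h M k\<bar> powr \<alpha>) * cis (2 * pi * real_of_int (int j - int i) * real k / real M)) / of_nat M
     = kernel_c h \<alpha> (int i - int j) + infsum (\<lambda>l. kernel_c h \<alpha> (int i - int j + l * int M)) (UNIV - {0})"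
proof -
  define c where "c = kernel_c h \<alpha>"
  define n where "n = int j - int i"
  have d: "complex_of_real (\<bar>xi_bar h M k\<bar> powr \<alpha>) = infsum (\<lambda>s. c s * cis (- (2 * pi * real_of_int s * real k / real M))) UNIV"
    if k: "k < M" for k
    unfolding c_def using inversion[OF h a a2 xi_bar_range(1)[OF h M k]] xi_bar_range(2)[OF h M k] by simp
  have sm: "(\<lambda>s. c s * cis (g s)) summable_on A" for g A unfolding c_def by (rule kc_cis_summable[OF h a a2])
  have "(\<Sum>k<M. complex_of_real (\<bar>xi_bar h M k\<bar> powr \<alpha>) * cis (2 * pi * real_of_int n * real k / real M))
      = (\<Sum>k<M. infsum (\<lambda>s. c s * cis (2 * pi * real_of_int (n - s) * real k / real M)) UNIV)"
  proof (rule sum.cong[OF refl])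
    fix k assume "k \<in> {..<M}"
    then have k: "k < M" by simp
    have "complex_of_real (\<bar>xi_bar h M k\<bar> powr \<alpha>) * cis (2 * pi * real_of_int n * real k / real M)
       = infsum (\<lambda>s. c s * cis (- (2 * pi * real_of_int s * real k / real M)) * cis (2 * pi * real_of_int n * real k / real M)) UNIV"
      unfolding d[OF k] by (rule infsum_cmult_left'[symmetric])
    also have "\<dots> = infsum (\<lambda>s. c s * cis (2 * pi * real_of_int (n - s) * real k / real M)) UNIV"
    proof (rule infsum_cong)
      fix s
      have eq: "- (2 * pi * real_of_int s * real k / real M) + 2 * pi * real_of_int n * real k / real M
          = 2 * pi * real_of_int (n - s) * real k / real M"
        by (simp add: algebra_simps diff_divide_distrib)
      show "c s * cis (- (2 * pi * real_of_int s * real k / real M)) * cis (2 * pi * real_of_int n * real k / real M)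
          = c s * cis (2 * pi * real_of_int (n - s) * real k / real M)"
        by (metis mult.assoc cis_mult eq)
    qed
    finally show "complex_of_real (\<bar>xi_bar h M k\<bar> powr \<alpha>) * cis (2 * pi * real_of_int n * real k / real M)
       = infsum (\<lambda>s. c s * cis (2 * pi * real_of_int (n - s) * real k / real M)) UNIV" .
  qed
  also have "\<dots> = infsum (\<lambda>s. \<Sum>k<M. c s * cis (2 * pi * real_of_int (n - s) * real k / real M)) UNIV"
    using infsum_finsum[of "{..<M}" "\<lambda>k s. c s * cis (2 * pi * real_of_int (n - s) * real k / real M)" UNIV] sm
    by simp
  also have "\<dots> = infsum (\<lambda>s. c s * (if int M dvd (n - s) then of_nat M else 0)) UNIV"
  proof (rule infsum_cong)
    fix s
    show "(\<Sum>k<M. c s * cis (2 * pi * real_of_int (n - s) * real k / real M)) = c s * (if int M dvd (n - s) then of_nat M else 0)"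
      unfolding sum_distrib_left[symmetric] discrete_orth[OF M(1)] ..
  qed
  also have "\<dots> = infsum (\<lambda>s. c s * of_nat M) {s. int M dvd (n - s)}"
    by (rule infsum_cong_neutral) auto
  also have "\<dots> = infsum c {s. int M dvd (n - s)} * of_nat M"
    by (rule infsum_cmult_left')
  finally have S1: "(\<Sum>k<M. complex_of_real (\<bar>xi_bar h M k\<bar> powr \<alpha>) * cis (2 * pi * real_of_int n * real k / real M)) / of_nat M
      = infsum c {s. int M dvd (n - s)}" using M by simp
  have bij: "bij_betw (\<lambda>l. n - l * int M) UNIV {s. int M dvd (n - s)}"
  proof (rule bij_betw_byWitness[where f' = "\<lambda>s. (n - s) div int M"])
    show "\<forall>l\<in>UNIV. (n - (n - l * int M)) div int M = l" using M by simp
    show "\<forall>s\<in>{s. int M dvd (n - s)}. n - (n - s) div int M * int M = s" by auto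
    show "(\<lambda>l. n - l * int M) ` UNIV \<subseteq> {s. int M dvd (n - s)}" by auto
    show "(\<lambda>s. (n - s) div int M) ` {s. int M dvd (n - s)} \<subseteq> UNIV" by simp
  qed
  have "infsum c {s. int M dvd (n - s)} = infsum (\<lambda>l. c (n - l * int M)) UNIV"
    using infsum_reindex_bij_betw[OF bij, of c] by simp
  also have "\<dots> = infsum (\<lambda>l. c (int i - int j + l * int M)) UNIV"
  proof (rule infsum_cong)
    fix l
    have "n - l * int M = - (int i - int j + l * int M)" by (simp add: n_def)
    then show "c (n - l * int M) = c (int i - int j + l * int M)"
      unfolding c_def using kernel_c_even[OF h a] by metis
  qed
  also have "\<dots> = c (int i - int j) + infsum (\<lambda>l. c (int i - int j + l * int M)) (UNIV - {0})"
  proof -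
    have inj: "inj_on (\<lambda>l. int i - int j + l * int M) UNIV" using M by (auto simp: inj_on_def)
    have "c summable_on (\<lambda>l. int i - int j + l * int M) ` UNIV"
      using sm[of "\<lambda>_. 0" "(\<lambda>l. int i - int j + l * int M) ` UNIV"] by simp
    then have "(\<lambda>l. c (int i - int j + l * int M)) summable_on UNIV"
      using summable_on_reindex[OF inj, of c] by (simp add: o_def)
    then have s0: "(\<lambda>l. c (int i - int j + l * int M)) summable_on (UNIV - {0})"
      by (rule summable_on_subset) simp
    have "infsum (\<lambda>l. c (int i - int j + l * int M)) (insert 0 (UNIV - {0}))
        = c (int i - int j + 0 * int M) + infsum (\<lambda>l. c (int i - int j + l * int M)) (UNIV - {0})"
      by (rule infsum_insert[OF s0]) simp
    then show ?thesis by (simp add: insert_absorb)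
  qed
  finally show ?thesis using S1 unfolding c_def n_def by simp
qed

lemma mult_entry:
  assumes "i < dim_row A" "j < dim_col B" "dim_col A = n" "dim_row B = n"
  shows "(A * B) $$ (i,j) = (\<Sum>k<n. A $$ (i,k) * B $$ (k,j))"
  using assms by (simp add: index_mult_mat scalar_prod_def atLeast0LessThan)

lemma dims:
  "dim_row (QFT L) = L" "dim_col (QFT L) = L"
  "dim_row (QFT_inv L) = L" "dim_col (QFT_inv L) = L"
  "dim_row (diag_of L d) = L" "dim_col (diag_of L d) = L"
  "dim_row (pad N M) = M" "dim_col (pad N M) = N"
  "dim_row (ctrans A) = dim_col A" "dim_col (ctrans A) = dim_row A"
  "dim_row (kron A B) = dim_row A * dim_row B" "dim_col (kron A B) = dim_col A * dim_col B"
  "dim_row ket0 = 2" "dim_col ket0 = 1" "dim_row bra0 = 1" "dim_col bra0 = 2"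
  "dim_row (A_tilde h \<alpha> L) = L" "dim_col (A_tilde h \<alpha> L) = L"
  "dim_row (A_mat h \<alpha> N) = N" "dim_col (A_mat h \<alpha> N) = N"
  "dim_row (E_mat h \<alpha> N M) = N" "dim_col (E_mat h \<alpha> N M) = N"
  by (simp_all add: QFT_def QFT_inv_def diag_of_def pad_def ctrans_def kron_def ket0_def bra0_def
       A_tilde_def A_mat_def E_mat_def)

lemma sum_2M: "(\<Sum>b<2*(M::nat). g b) = (\<Sum>k<M. g (2*k) + g (2*k+1))"
  by (induction M) (simp_all add: sum.distrib add_ac)

lemma sum_delta_nat: "k < (n::nat) \<Longrightarrow> (\<Sum>j<n. (if j = k then a j else 0)) = a k"
proof -
  assume k: "k < n"
  have "(\<Sum>j<n. (if j = k then a j else 0)) = (\<Sum>j<n. (if j = k then a k else 0))"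
    by (rule sum.cong) auto
  then show ?thesis using k by simp
qed

lemma At_entry:
  assumes i: "i < L" and j: "j < L"
  shows "A_tilde h \<alpha> L $$ (i,j) = (\<Sum>k<L. complex_of_real (\<bar>xi_bar h L k\<bar> powr \<alpha>)
     * cis (2 * pi * real_of_int (int j - int i) * real k / real L)) / of_nat L"
proof -
  define d where "d = (\<lambda>k. complex_of_real (\<bar>xi_bar h L k\<bar> powr \<alpha>))"
  have QI: "QFT_inv L $$ (i,k) = complex_of_real (1 / sqrt (real L)) * cis (- (2 * pi * real i * real k / real L))"
    if "k < L" for k
    using that i by (simp add: QFT_inv_def ctrans_def QFT_def dims cis_cnj)
  have Q: "QFT L $$ (k,j) = complex_of_real (1 / sqrt (real L)) * cis (2 * pi * real j * real k / real L)"
    if "k < L" for k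
    using that j by (simp add: QFT_def)
  have D: "(QFT_inv L * diag_of L d) $$ (i,k) = QFT_inv L $$ (i,k) * d k" if k: "k < L" for k
  proof -
    have "(QFT_inv L * diag_of L d) $$ (i,k) = (\<Sum>l<L. QFT_inv L $$ (i,l) * diag_of L d $$ (l,k))"
      using i k by (intro mult_entry) (simp_all add: dims)
    also have "\<dots> = (\<Sum>l<L. if l = k then QFT_inv L $$ (i,l) * d l else 0)"
      using k by (intro sum.cong) (auto simp: diag_of_def)
    also have "\<dots> = QFT_inv L $$ (i,k) * d k" using k by (rule sum_delta_nat)
    finally show ?thesis .
  qed
  have L0: "0 < L" using i by simp
  have "A_tilde h \<alpha> L $$ (i,j) = (\<Sum>k<L. (QFT_inv L * diag_of L d) $$ (i,k) * QFT L $$ (k,j))"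
    unfolding A_tilde_def d_def using i j by (intro mult_entry) (simp_all add: dims)
  also have "\<dots> = (\<Sum>k<L. (d k * cis (2 * pi * real_of_int (int j - int i) * real k / real L)) / of_nat L)"
  proof (rule sum.cong[OF refl])
    fix k assume "k \<in> {..<L}"
    then have k: "k < L" by simp
    have s: "complex_of_real (1 / sqrt (real L)) * complex_of_real (1 / sqrt (real L)) = 1 / of_nat L"
    proof -
      have "1 / sqrt (real L) * (1 / sqrt (real L)) = 1 / real L" using L0 by (simp add: real_sqrt_mult[symmetric])
      then show ?thesis by (metis of_real_mult of_real_divide of_real_1 of_real_of_nat_eq)
    qed
    have c: "cis (- (2 * pi * real i * real k / real L)) * cis (2 * pi * real j * real k / real L)
        = cis (2 * pi * real_of_int (int j - int i) * real k / real L)"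
    proof -
      have "- (2 * pi * real i * real k / real L) + 2 * pi * real j * real k / real L
          = 2 * pi * real_of_int (int j - int i) * real k / real L"
        by (simp add: algebra_simps diff_divide_distrib)
      then show ?thesis by (metis cis_mult)
    qed
    show "(QFT_inv L * diag_of L d) $$ (i,k) * QFT L $$ (k,j) = d k * cis (2 * pi * real_of_int (int j - int i) * real k / real L) / of_nat L"
      unfolding D[OF k] QI[OF k] Q[OF k]
      using s c by (simp add: field_simps)
  qed
  also have "\<dots> = (\<Sum>k<L. d k * cis (2 * pi * real_of_int (int j - int i) * real k / real L)) / of_nat L"
    by (simp add: sum_divide_distrib)
  finally show ?thesis unfolding d_def .
qed

lemma pad_entry:
  assumes i: "i < N" and j: "j < N" and NM: "N \<le> M" and X: "dim_row X = M" "dim_col X = M"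
  shows "(ctrans (pad N M) * X * pad N M) $$ (i,j) = X $$ (i,j)"
proof -
  have iM: "i < M" "j < M" using i j NM by auto
  have P1: "(ctrans (pad N M) * X) $$ (i,c) = X $$ (i,c)" if c: "c < M" for c
  proof -
    have "(ctrans (pad N M) * X) $$ (i,c) = (\<Sum>a<M. ctrans (pad N M) $$ (i,a) * X $$ (a,c))"
      using i c X by (intro mult_entry) (simp_all add: dims)
    also have "\<dots> = (\<Sum>a<M. if a = i then X $$ (a,c) else 0)"
      using i by (intro sum.cong) (auto simp: ctrans_def pad_def)
    also have "\<dots> = X $$ (i,c)" by (rule sum_delta_nat[OF iM(1)])
    finally show ?thesis .
  qed
  have "(ctrans (pad N M) * X * pad N M) $$ (i,j) = (\<Sum>c<M. (ctrans (pad N M) * X) $$ (i,c) * pad N M $$ (c,j))"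
    using i j X by (intro mult_entry) (simp_all add: dims)
  also have "\<dots> = (\<Sum>c<M. if c = j then (ctrans (pad N M) * X) $$ (i,c) else 0)"
    using j by (intro sum.cong) (auto simp: pad_def)
  also have "\<dots> = (ctrans (pad N M) * X) $$ (i,j)" using iM by (intro sum_delta_nat)
  finally show ?thesis using P1[OF iM(2)] by simp
qed

lemma At_entry2:
  assumes i: "i < L" and j: "j < L"
  shows "A_tilde h \<alpha> L $$ (i,j) = (\<Sum>k<L. QFT_inv L $$ (i,k) * complex_of_real (\<bar>xi_bar h L k\<bar> powr \<alpha>) * QFT L $$ (k,j))"
proof -
  define d where "d = (\<lambda>k. complex_of_real (\<bar>xi_bar h L k\<bar> powr \<alpha>))"
  have D: "(QFT_inv L * diag_of L d) $$ (i,k) = QFT_inv L $$ (i,k) * d k" if k: "k < L" for k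
  proof -
    have "(QFT_inv L * diag_of L d) $$ (i,k) = (\<Sum>l<L. QFT_inv L $$ (i,l) * diag_of L d $$ (l,k))"
      using i k by (intro mult_entry) (simp_all add: dims)
    also have "\<dots> = (\<Sum>l<L. if l = k then QFT_inv L $$ (i,l) * d l else 0)"
      using k by (intro sum.cong) (auto simp: diag_of_def)
    also have "\<dots> = QFT_inv L $$ (i,k) * d k" using k by (rule sum_delta_nat)
    finally show ?thesis .
  qed
  have "A_tilde h \<alpha> L $$ (i,j) = (\<Sum>k<L. (QFT_inv L * diag_of L d) $$ (i,k) * QFT L $$ (k,j))"
    unfolding A_tilde_def d_def using i j by (intro mult_entry) (simp_all add: dims)
  also have "\<dots> = (\<Sum>k<L. QFT_inv L $$ (i,k) * d k * QFT L $$ (k,j))"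
    by (intro sum.cong) (simp_all add: D)
  finally show ?thesis unfolding d_def .
qed

lemma UD_entry:
  assumes U: "UD \<in> carrier_mat (2*M) (2*M)"
    and col: "\<And>k. k < M \<Longrightarrow> mult_mat_vec UD (unit_vec (2 * M) (2 * k)) =
            complex_of_real (p k) \<cdot>\<^sub>v unit_vec (2 * M) (2 * k)
          + complex_of_real (q k) \<cdot>\<^sub>v unit_vec (2 * M) (2 * k + 1)"
    and l: "l < M" and k: "k < M"
  shows "UD $$ (2*l, 2*k) = (if l = k then complex_of_real (p k) else 0)"
proof -
  have d: "dim_row UD = 2*M" "dim_col UD = 2*M" using U by auto
  have "(mult_mat_vec UD (unit_vec (2 * M) (2 * k))) $ (2*l) = UD $$ (2*l, 2*k)"
    using d l k by (simp add: index_mult_mat_vec scalar_prod_right_unit index_row)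
  moreover have "(complex_of_real (p k) \<cdot>\<^sub>v unit_vec (2 * M) (2 * k)
          + complex_of_real (q k) \<cdot>\<^sub>v unit_vec (2 * M) (2 * k + 1)) $ (2*l)
       = (if l = k then complex_of_real (p k) else 0)"
    using l k by (simp add: index_unit_vec)
  ultimately show ?thesis using col[OF k] by simp
qed

lemma BE_entry:
  assumes U: "UD \<in> carrier_mat (2*M) (2*M)"
    and col: "\<And>k. k < M \<Longrightarrow> mult_mat_vec UD (unit_vec (2 * M) (2 * k)) =
            complex_of_real (p k) \<cdot>\<^sub>v unit_vec (2 * M) (2 * k)
          + complex_of_real (q k) \<cdot>\<^sub>v unit_vec (2 * M) (2 * k + 1)"
    and i: "i < N" and j: "j < N" and NM: "N \<le> M"
  shows "(kron (ctrans (pad N M)) bra0 * U_BE M UD * kron (pad N M) ket0) $$ (i,j)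
       = (\<Sum>k<M. QFT_inv M $$ (i,k) * complex_of_real (p k) * QFT M $$ (k,j))"
proof -
  have d: "dim_row UD = 2*M" "dim_col UD = 2*M" using U by auto
  have iM: "i < M" "j < M" using i j NM by auto
  define K1 where "K1 = kron (ctrans (pad N M)) bra0"
  define K2 where "K2 = kron (pad N M) ket0"
  define W1 where "W1 = kron (QFT_inv M) (1\<^sub>m 2)"
  define W2 where "W2 = kron (QFT M) (1\<^sub>m 2)"
  have dK: "dim_row K1 = N" "dim_col K1 = 2*M" "dim_row K2 = 2*M" "dim_col K2 = N"
    unfolding K1_def K2_def by (simp_all add: dims)
  have dW: "dim_row W1 = 2*M" "dim_col W1 = 2*M" "dim_row W2 = 2*M" "dim_col W2 = 2*M"
    unfolding W1_def W2_def by (simp_all add: dims)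
  have K1e: "K1 $$ (i, 2*k) = (if k = i then 1 else 0)" "K1 $$ (i, Suc (2*k)) = 0" if "k < M" for k
    using that i unfolding K1_def by (auto simp: kron_def dims ctrans_def pad_def bra0_def)
  have K2e: "K2 $$ (2*k, j) = (if k = j then 1 else 0)" "K2 $$ (Suc (2*k), j) = 0" if "k < M" for k
    using that j unfolding K2_def by (auto simp: kron_def dims pad_def ket0_def)
  have W1e: "W1 $$ (2*i, 2*l) = QFT_inv M $$ (i,l)" "W1 $$ (2*i, Suc (2*l)) = 0" if "l < M" for l
    using that iM unfolding W1_def by (auto simp: kron_def dims)
  have W2e: "W2 $$ (2*k, 2*j) = QFT M $$ (k,j)" "W2 $$ (Suc (2*k), 2*j) = 0" if "k < M" for k
    using that iM unfolding W2_def by (auto simp: kron_def dims)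
  have WU: "(W1 * UD) $$ (2*i, 2*k) = QFT_inv M $$ (i,k) * complex_of_real (p k)" if k: "k < M" for k
  proof -
    have "(W1 * UD) $$ (2*i, 2*k) = (\<Sum>b<2*M. W1 $$ (2*i, b) * UD $$ (b, 2*k))"
      using iM k d dW by (intro mult_entry) simp_all
    also have "\<dots> = (\<Sum>l<M. W1 $$ (2*i, 2*l) * UD $$ (2*l, 2*k) + W1 $$ (2*i, 2*l+1) * UD $$ (2*l+1, 2*k))"
      by (rule sum_2M)
    also have "\<dots> = (\<Sum>l<M. if l = k then QFT_inv M $$ (i,l) * complex_of_real (p k) else 0)"
      by (intro sum.cong) (auto simp: W1e UD_entry[OF U col _ k])
    also have "\<dots> = QFT_inv M $$ (i,k) * complex_of_real (p k)" using k by (rule sum_delta_nat)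
    finally show ?thesis .
  qed
  have UU: "(W1 * UD * W2) $$ (2*i, 2*j) = (\<Sum>k<M. QFT_inv M $$ (i,k) * complex_of_real (p k) * QFT M $$ (k,j))"
  proof -
    have "(W1 * UD * W2) $$ (2*i, 2*j) = (\<Sum>c<2*M. (W1 * UD) $$ (2*i, c) * W2 $$ (c, 2*j))"
      using iM d dW by (intro mult_entry) simp_all
    also have "\<dots> = (\<Sum>k<M. (W1 * UD) $$ (2*i, 2*k) * W2 $$ (2*k, 2*j) + (W1 * UD) $$ (2*i, 2*k+1) * W2 $$ (2*k+1, 2*j))"
      by (rule sum_2M)
    also have "\<dots> = (\<Sum>k<M. QFT_inv M $$ (i,k) * complex_of_real (p k) * QFT M $$ (k,j))"
      by (intro sum.cong) (auto simp: W2e WU)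
    finally show ?thesis .
  qed
  have dU: "dim_row (W1 * UD * W2) = 2*M" "dim_col (W1 * UD * W2) = 2*M" using dW d by simp_all
  have A: "(K1 * (W1 * UD * W2)) $$ (i, c) = (W1 * UD * W2) $$ (2*i, c)" if c: "c < 2*M" for c
  proof -
    have "(K1 * (W1 * UD * W2)) $$ (i, c) = (\<Sum>a<2*M. K1 $$ (i,a) * (W1 * UD * W2) $$ (a, c))"
      using i c dK dU by (intro mult_entry) simp_all
    also have "\<dots> = (\<Sum>k<M. K1 $$ (i,2*k) * (W1 * UD * W2) $$ (2*k, c) + K1 $$ (i,2*k+1) * (W1 * UD * W2) $$ (2*k+1, c))"
      by (rule sum_2M)
    also have "\<dots> = (\<Sum>k<M. if k = i then (W1 * UD * W2) $$ (2*k, c) else 0)"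
      by (intro sum.cong) (auto simp: K1e)
    also have "\<dots> = (W1 * UD * W2) $$ (2*i, c)" using iM by (intro sum_delta_nat)
    finally show ?thesis .
  qed
  have "(K1 * (W1 * UD * W2) * K2) $$ (i,j) = (\<Sum>c<2*M. (K1 * (W1 * UD * W2)) $$ (i,c) * K2 $$ (c, j))"
    using i j dK dU by (intro mult_entry) simp_all
  also have "\<dots> = (\<Sum>k<M. (K1 * (W1 * UD * W2)) $$ (i,2*k) * K2 $$ (2*k, j) + (K1 * (W1 * UD * W2)) $$ (i,2*k+1) * K2 $$ (2*k+1, j))"
    by (rule sum_2M)
  also have "\<dots> = (\<Sum>k<M. if k = j then (K1 * (W1 * UD * W2)) $$ (i,2*k) else 0)"
    by (intro sum.cong) (auto simp: K2e)
  also have "\<dots> = (K1 * (W1 * UD * W2)) $$ (i,2*j)" using iM by (intro sum_delta_nat)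
  also have "\<dots> = (W1 * UD * W2) $$ (2*i, 2*j)" using A iM by simp
  finally have "(K1 * (W1 * UD * W2) * K2) $$ (i,j) = (\<Sum>k<M. QFT_inv M $$ (i,k) * complex_of_real (p k) * QFT M $$ (k,j))"
    unfolding UU .
  then show ?thesis unfolding U_BE_def K1_def K2_def W1_def W2_def .
qed

theorem theorem1:
  fixes h \<alpha> :: real and n m N M :: nat and UD :: "complex mat"
  assumes "h > 0" and "0 < \<alpha>" and "\<alpha> \<le> 2"
    and "N = 2 ^ n" and "M = 2 ^ m" and "M \<ge> 2 * N"
    and "unitary_mat (2 * M) UD"
    and "\<And>k. k < M \<Longrightarrow> mult_mat_vec UD (unit_vec (2 * M) (2 * k)) =
            complex_of_real (phi h \<alpha> M k) \<cdot>\<^sub>v unit_vec (2 * M) (2 * k)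
          + complex_of_real (sqrt (1 - (phi h \<alpha> M k)\<^sup>2)) \<cdot>\<^sub>v unit_vec (2 * M) (2 * k + 1)"
  shows "ctrans (pad N M) * A_tilde h \<alpha> M * pad N M = A_mat h \<alpha> N + E_mat h \<alpha> N M
       \<and> kron (ctrans (pad N M)) bra0 * U_BE M UD * kron (pad N M) ket0
           = complex_of_real (1 / lambda_max h \<alpha>) \<cdot>\<^sub>m (A_mat h \<alpha> N + E_mat h \<alpha> N M)"
proof -
  note h = assms(1) and a = assms(2) and a2 = assms(3)
  have N0: "0 < N" using assms(4) by simp
  have NM: "N \<le> M" using assms(6) by simp
  have M0: "0 < M" using N0 NM by simp
  have Meven: "even M"
  proof -
    have "m \<noteq> 0"
    proof
      assume "m = 0"
      then have "M = 1" using assms(5) by simp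
      then show False using assms(6) N0 by simp
    qed
    then show ?thesis using assms(5) by (cases m) auto
  qed
  have UDc: "UD \<in> carrier_mat (2*M) (2*M)" using assms(7) by (simp add: unitary_mat_def)
  have entry: "(ctrans (pad N M) * A_tilde h \<alpha> M * pad N M) $$ (i,j) = (A_mat h \<alpha> N + E_mat h \<alpha> N M) $$ (i,j)"
    if i: "i < N" and j: "j < N" for i j
  proof -
    have iM: "i < M" "j < M" using i j NM by auto
    have "(ctrans (pad N M) * A_tilde h \<alpha> M * pad N M) $$ (i,j) = A_tilde h \<alpha> M $$ (i,j)"
      by (rule pad_entry[OF i j NM]) (simp_all add: dims)
    also have "\<dots> = kernel_c h \<alpha> (int i - int j) + infsum (\<lambda>l. kernel_c h \<alpha> (int i - int j + l * int M)) (UNIV - {0})"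
      unfolding At_entry[OF iM] by (rule aliasing[OF h a a2 M0 Meven])
    also have "\<dots> = (A_mat h \<alpha> N + E_mat h \<alpha> N M) $$ (i,j)"
      using i j by (simp add: A_mat_def E_mat_def dims)
    finally show ?thesis .
  qed
  have C1: "ctrans (pad N M) * A_tilde h \<alpha> M * pad N M = A_mat h \<alpha> N + E_mat h \<alpha> N M"
  proof (rule eq_matI)
    fix i j assume "i < dim_row (A_mat h \<alpha> N + E_mat h \<alpha> N M)" "j < dim_col (A_mat h \<alpha> N + E_mat h \<alpha> N M)"
    then have "i < N" "j < N" by (simp_all add: dims)
    then show "(ctrans (pad N M) * A_tilde h \<alpha> M * pad N M) $$ (i,j) = (A_mat h \<alpha> N + E_mat h \<alpha> N M) $$ (i,j)"
      by (rule entry)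
  qed (simp_all add: dims)
  have lam: "0 < lambda_max h \<alpha>" using h by (simp add: lambda_max_def)
  have entry2: "(kron (ctrans (pad N M)) bra0 * U_BE M UD * kron (pad N M) ket0) $$ (i,j)
      = (complex_of_real (1 / lambda_max h \<alpha>) \<cdot>\<^sub>m (A_mat h \<alpha> N + E_mat h \<alpha> N M)) $$ (i,j)"
    if i: "i < N" and j: "j < N" for i j
  proof -
    have iM: "i < M" "j < M" using i j NM by auto
    have "(kron (ctrans (pad N M)) bra0 * U_BE M UD * kron (pad N M) ket0) $$ (i,j)
        = (\<Sum>k<M. QFT_inv M $$ (i,k) * complex_of_real (phi h \<alpha> M k) * QFT M $$ (k,j))"
      by (rule BE_entry[OF UDc assms(8) i j NM])
    also have "\<dots> = complex_of_real (1 / lambda_max h \<alpha>) *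
        (\<Sum>k<M. QFT_inv M $$ (i,k) * complex_of_real (\<bar>xi_bar h M k\<bar> powr \<alpha>) * QFT M $$ (k,j))"
      unfolding sum_distrib_left
      by (intro sum.cong) (simp_all add: phi_def)
    also have "\<dots> = complex_of_real (1 / lambda_max h \<alpha>) * A_tilde h \<alpha> M $$ (i,j)"
      by (simp add: At_entry2[OF iM])
    also have "A_tilde h \<alpha> M $$ (i,j) = (A_mat h \<alpha> N + E_mat h \<alpha> N M) $$ (i,j)"
      using entry[OF i j] pad_entry[OF i j NM, of "A_tilde h \<alpha> M"] by (simp add: dims)
    finally show ?thesis using i j by (simp add: dims)
  qed
  have C2: "kron (ctrans (pad N M)) bra0 * U_BE M UD * kron (pad N M) ket0
      = complex_of_real (1 / lambda_max h \<alpha>) \<cdot>\<^sub>m (A_mat h \<alpha> N + E_mat h \<alpha> N M)"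
  proof (rule eq_matI)
    fix i j assume "i < dim_row (complex_of_real (1 / lambda_max h \<alpha>) \<cdot>\<^sub>m (A_mat h \<alpha> N + E_mat h \<alpha> N M))"
      "j < dim_col (complex_of_real (1 / lambda_max h \<alpha>) \<cdot>\<^sub>m (A_mat h \<alpha> N + E_mat h \<alpha> N M))"
    then have "i < N" "j < N" by (simp_all add: dims)
    then show "(kron (ctrans (pad N M)) bra0 * U_BE M UD * kron (pad N M) ket0) $$ (i,j)
      = (complex_of_real (1 / lambda_max h \<alpha>) \<cdot>\<^sub>m (A_mat h \<alpha> N + E_mat h \<alpha> N M)) $$ (i,j)"
      by (rule entry2)
  qed (simp_all add: dims U_BE_def)
  show ?thesis using C1 C2 by simp
qed

end
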